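(* Let $\{\ket{\Phi_b}\}_{b=1}^{2^{n+m}}$ be a stabilizer basis of $\mathcal{H}_n\otimes\mathcal{H}_m$, let $\ket\psi\in\mathcal{H}_m$ be an arbitrary unit vector, and let $\mu_b=(I\otimes\bra\psi)\ket{\Phi_b}\!\bra{\Phi_b}(I\otimes\ket\psi)$. Let $p$ be the entanglement entropy of the states $\ket{\Phi_b}$ across the bipartition $\mathcal{H}_n|\mathcal{H}_m$. Then $s_{\boldsymbol\mu}\le 2^{n+p}$. In particular, for a given such stabilizer basis, an informationally complete POVM of this form (for a suitable $\ket\psi$) is possible if and only if the states $\ket{\Phi_b}$ are maximally entangled, i.e. $m\ge n$ and $p=n$.
   Context: $\mathcal{H}_n=(\mathbb{C}^2)^{\otimes n}$ (data qubits), $\mathcal{H}_m=(\mathbb{C}^2)^{\otimes m}$ (ancilla qubits). A stabilizer basis of $k$ qubits is the orthonormal basis of common eigenvectors of $k$ independent pairwise commuting Pauli operators; such bases arise as $\ket{\Phi_b}=U^\dagger\ket{\Phi'_b}$ with $U$ Clifford and $\{\ket{\Phi_b'}\}$ a stabilizer basis. The entanglement entropy of a pure state is the von Neumann entropy (base 2) of its reduced state on $\mathcal{H}_n$; for a stabilizer basis this is an integer $0\le p\le\min(n,m)$, the same for all basis elements. $s_{\boldsymbol\mu}=\dim\operatorname{span}(\{\mu_b\})$; $\boldsymbol\mu$ is informationally complete (IC) if $s_{\boldsymbol\mu}=4^n$. *)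

theory Defs
  imports "Jordan_Normal_Form.VS_Connect" "Jordan_Normal_Form.Char_Poly"
begin

definition ket :: "complex vec \<Rightarrow> complex mat" where
  "ket v = mat (dim_vec v) 1 (\<lambda>(i, j). v $ i)"

definition bra :: "complex vec \<Rightarrow> complex mat" where
  "bra v = mat 1 (dim_vec v) (\<lambda>(i, j). cnj (v $ j))"

text \<open>Kronecker (tensor) product; the index of the first factor is the most significant one,
  i.e. basis vector (i,j) of A-space tensor B-space has index i * dim_B + j.\<close>
definition kron :: "complex mat \<Rightarrow> complex mat \<Rightarrow> complex mat" where
  "kron A B = mat (dim_row A * dim_row B) (dim_col A * dim_col B)
     (\<lambda>(i, j). A $$ (i div dim_row B, j div dim_col B) * B $$ (i mod dim_row B, j mod dim_col B))"

definition unit_state :: "nat \<Rightarrow> complex vec \<Rightarrow> bool" where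
  "unit_state k v \<longleftrightarrow> v \<in> carrier_vec (2 ^ k) \<and> v \<bullet>c v = 1"

text \<open>A single-qubit Pauli letter is encoded by its symplectic bits (x,z):
  (False,False) = I, (True,False) = X, (False,True) = Z, (True,True) = Y.\<close>
definition pauli1 :: "bool \<times> bool \<Rightarrow> complex mat" where
  "pauli1 p = (case p of
      (False, False) \<Rightarrow> mat_of_rows_list 2 [[1, 0], [0, 1]]
    | (True, False)  \<Rightarrow> mat_of_rows_list 2 [[0, 1], [1, 0]]
    | (False, True)  \<Rightarrow> mat_of_rows_list 2 [[1, 0], [0, -1]]
    | (True, True)   \<Rightarrow> mat_of_rows_list 2 [[0, -\<i>], [\<i>, 0]])"

text \<open>Pauli string operator (tensor product of single-qubit Paulis; signs are irrelevant
  for common eigenvectors, so Hermitian Pauli operators are considered up to sign).\<close>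
fun pauli_mat :: "(bool \<times> bool) list \<Rightarrow> complex mat" where
  "pauli_mat [] = 1\<^sub>m 1"
| "pauli_mat (p # ps) = kron (pauli1 p) (pauli_mat ps)"

text \<open>Independence of the Pauli operators P 0, ..., P (k-1): no nonempty product of them is
  proportional to the identity, i.e. their symplectic vectors are linearly independent over GF(2).\<close>
definition pauli_independent :: "nat \<Rightarrow> nat \<Rightarrow> (nat \<Rightarrow> (bool \<times> bool) list) \<Rightarrow> bool" where
  "pauli_independent q k P \<longleftrightarrow>
     (\<forall>S \<subseteq> {..<k}. S \<noteq> {} \<longrightarrow>
        (\<exists>i<q. odd (card {j \<in> S. fst (P j ! i)}) \<or> odd (card {j \<in> S. snd (P j ! i)})))"

definition stabilizer_basis :: "nat \<Rightarrow> (nat \<Rightarrow> complex vec) \<Rightarrow> bool" where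
  "stabilizer_basis k \<Phi> \<longleftrightarrow>
     (\<forall>b < 2 ^ k. \<Phi> b \<in> carrier_vec (2 ^ k)) \<and>
     (\<forall>b < 2 ^ k. \<forall>b' < 2 ^ k. \<Phi> b \<bullet>c \<Phi> b' = (if b = b' then 1 else 0)) \<and>
     (\<exists>P :: nat \<Rightarrow> (bool \<times> bool) list.
        (\<forall>j < k. length (P j) = k) \<and>
        (\<forall>i < k. \<forall>j < k. pauli_mat (P i) * pauli_mat (P j) = pauli_mat (P j) * pauli_mat (P i)) \<and>
        pauli_independent k k P \<and>
        (\<forall>b < 2 ^ k. \<forall>j < k. \<exists>ev. eigenvector (pauli_mat (P j)) (\<Phi> b) ev))"

definition reduced_state :: "nat \<Rightarrow> nat \<Rightarrow> complex vec \<Rightarrow> complex mat" where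
  "reduced_state n m v = mat (2 ^ n) (2 ^ n)
     (\<lambda>(i, i'). \<Sum>j < 2 ^ m. v $ (i * 2 ^ m + j) * cnj (v $ (i' * 2 ^ m + j)))"

text \<open>Von Neumann entropy (base 2): - sum of lambda log2 lambda over the eigenvalues lambda,
  counted with (algebraic) multiplicity; 0 log 0 = 0 holds since log 2 0 = 0.\<close>
definition von_neumann_entropy :: "complex mat \<Rightarrow> real" where
  "von_neumann_entropy \<rho> =
     - (\<Sum>e \<in> {e. poly (char_poly \<rho>) e = 0}.
          real (order e (char_poly \<rho>)) * (Re e * log 2 (Re e)))"

definition entanglement_entropy :: "nat \<Rightarrow> nat \<Rightarrow> complex vec \<Rightarrow> real" where
  "entanglement_entropy n m v = von_neumann_entropy (reduced_state n m v)"

definition povm_elem :: "nat \<Rightarrow> complex vec \<Rightarrow> complex vec \<Rightarrow> complex mat" where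
  "povm_elem n \<psi> \<phi> = kron (1\<^sub>m (2 ^ n)) (bra \<psi>) * (ket \<phi> * bra \<phi>) * kron (1\<^sub>m (2 ^ n)) (ket \<psi>)"

definition span_dim :: "nat \<Rightarrow> complex mat set \<Rightarrow> nat" where
  "span_dim N S = vectorspace.dim class_ring
     ((module_mat TYPE(complex) N N)\<lparr>carrier := LinearCombinations.module.span class_ring (module_mat TYPE(complex) N N) S\<rparr>)"

definition s_mu :: "nat \<Rightarrow> nat \<Rightarrow> (nat \<Rightarrow> complex vec) \<Rightarrow> complex vec \<Rightarrow> nat" where
  "s_mu n m \<Phi> \<psi> = span_dim (2 ^ n) {povm_elem n \<psi> (\<Phi> b) | b. b < 2 ^ (n + m)}"

end

theory Submission
  imports Defs "Jordan_Normal_Form.Schur_Decomposition"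
begin


definition tr :: "complex mat \<Rightarrow> complex" where "tr A = (\<Sum>i<dim_row A. A $$ (i,i))"

lemma sum_lessThan_add: "(\<Sum>l<(x::nat)+y. f l) = (\<Sum>l<x. f l) + (\<Sum>q<y. f (x+q))"
  by (induct y) (auto simp: add_ac)

lemma sum_mult_index: "(\<Sum>l<(a::nat)*b. f l) = (\<Sum>p<a. \<Sum>q<b. f (p*b+q)) "
proof (induct a)
  case (Suc a)
  have "(\<Sum>l<Suc a * b. f l) = (\<Sum>l<a*b + b. f l)" by (simp add: add.commute)
  also have "\<dots> = (\<Sum>l<a*b. f l) + (\<Sum>q<b. f (a*b+q))"
    by (rule sum_lessThan_add)
  finally show ?case using Suc by simp
qed simp

lemma kron_dims[simp]: "dim_row (kron A B) = dim_row A * dim_row B" "dim_col (kron A B) = dim_col A * dim_col B"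
  unfolding kron_def by auto

lemma kron_carrier[simp]: "kron A B \<in> carrier_mat (dim_row A * dim_row B) (dim_col A * dim_col B)"
  unfolding kron_def by auto

lemma kron_index[simp]: "i < dim_row A * dim_row B \<Longrightarrow> j < dim_col A * dim_col B \<Longrightarrow>
  kron A B $$ (i,j) = A $$ (i div dim_row B, j div dim_col B) * B $$ (i mod dim_row B, j mod dim_col B)"
  unfolding kron_def by auto

lemma div_mod_lt: "q < b \<Longrightarrow> (p*b+q) div b = (p::nat)" "q < b \<Longrightarrow> (p*b+q) mod b = (q::nat)"
  by auto

lemma kron_mult:
  assumes A: "A \<in> carrier_mat a1 a2" and B: "B \<in> carrier_mat b1 b2" and C: "C \<in> carrier_mat a2 a3" and D: "D \<in> carrier_mat b2 b3"
  shows "kron A B * kron C D = kron (A*C) (B*D)"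
proof (rule eq_matI)
  fix i j assume i: "i < dim_row (kron (A*C) (B*D))" and j: "j < dim_col (kron (A*C) (B*D))"
  from i j A B C D have i1: "i < a1*b1" and j1: "j < a3*b3" by auto
  then have b1: "b1 > 0" "b3 > 0" by (auto intro: gr0I)
  have "(kron A B * kron C D) $$ (i,j) = (\<Sum>l<a2*b2. kron A B $$ (i,l) * kron C D $$ (l,j))"
    using i1 j1 A B C D by (simp add: scalar_prod_def atLeast0LessThan)
  also have "\<dots> = (\<Sum>p<a2. \<Sum>q<b2. kron A B $$ (i,p*b2+q) * kron C D $$ (p*b2+q,j))"
    by (rule sum_mult_index)
  also have "\<dots> = (\<Sum>p<a2. \<Sum>q<b2. (A $$ (i div b1, p) * C $$ (p, j div b3)) * (B $$ (i mod b1, q) * D $$ (q, j mod b3)))"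
  proof (intro sum.cong refl)
    fix p q assume p: "p \<in> {..<a2}" and q: "q \<in> {..<b2}"
    have l: "p*b2+q < a2*b2"
    proof -
      have "p*b2+q < Suc p * b2" using q by simp
      also have "\<dots> \<le> a2*b2" using p by (intro mult_le_mono1) simp
      finally show ?thesis .
    qed
    show "kron A B $$ (i,p*b2+q) * kron C D $$ (p*b2+q,j) = (A $$ (i div b1, p) * C $$ (p, j div b3)) * (B $$ (i mod b1, q) * D $$ (q, j mod b3))"
      using A B C D i1 j1 l p q by (simp add: div_mod_lt)
  qed
  also have "\<dots> = (\<Sum>p<a2. A $$ (i div b1, p) * C $$ (p, j div b3)) * (\<Sum>q<b2. B $$ (i mod b1, q) * D $$ (q, j mod b3))"
    by (simp add: sum_product)
  also have "\<dots> = kron (A*C) (B*D) $$ (i,j)"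
    using A B C D i1 j1 b1
    by (simp add: scalar_prod_def atLeast0LessThan less_mult_imp_div_less)
  finally show "(kron A B * kron C D) $$ (i,j) = kron (A*C) (B*D) $$ (i,j)" .
qed (insert A B C D, auto)

lemma lt_mult_div_mod: "i < a*b \<Longrightarrow> i div b < (a::nat) \<and> i mod b < b"
  by (metis less_mult_imp_div_less mod_less_divisor mult_is_0 not_gr0 not_less_zero)

lemma mod_mult_div: "0 < c \<Longrightarrow> (i::nat) mod (b*c) div c = i div c mod b"
proof -
  assume c: "0 < c"
  have "i mod (b*c) = c * (i div c mod b) + i mod c" by (metis mod_mult2_eq mult.commute)
  then show ?thesis using c by simp
qed

lemma mod_mult_mod: "(i::nat) mod (b*c) mod c = i mod c"
  by (simp add: mod_mod_cancel)

lemma kron_smult_left: "kron (c \<cdot>\<^sub>m A) B = c \<cdot>\<^sub>m kron A B"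
  by (rule eq_matI) (auto simp: less_mult_imp_div_less)

lemma kron_smult_right: "kron A (c \<cdot>\<^sub>m B) = c \<cdot>\<^sub>m kron A B"
  by (rule eq_matI) (auto simp: lt_mult_div_mod)

lemma kron_one_one: "kron (1\<^sub>m a) (1\<^sub>m b) = 1\<^sub>m (a*b)"
proof (rule eq_matI)
  fix i j assume "i < dim_row (1\<^sub>m (a*b))" "j < dim_col (1\<^sub>m (a*b))"
  then have ij: "i < a*b" "j < a*b" by auto
  then have b: "b > 0" by (auto intro: gr0I)
  have "(i div b = j div b \<and> i mod b = j mod b) = (i = j)"
    by (metis div_mult_mod_eq)
  then show "kron (1\<^sub>m a) (1\<^sub>m b) $$ (i, j) = 1\<^sub>m (a * b) $$ (i, j)"
    using ij b by (auto simp: less_mult_imp_div_less)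
qed auto

lemma kron_one_1_left: "kron (1\<^sub>m 1) B = B"
  by (rule eq_matI) auto

lemma kron_assoc: "kron (kron A B) C = kron A (kron B C)"
proof (rule eq_matI)
  fix i j assume i: "i < dim_row (kron A (kron B C))" and j: "j < dim_col (kron A (kron B C))"
  let ?ra = "dim_row A" and ?rb = "dim_row B" and ?rc = "dim_row C"
  let ?ca = "dim_col A" and ?cb = "dim_col B" and ?cc = "dim_col C"
  from i have i': "i < ?ra * ?rb * ?rc" by (simp add: mult.assoc)
  from j have j': "j < ?ca * ?cb * ?cc" by (simp add: mult.assoc)
  have rc: "?rc > 0" "?rb > 0" "?cc > 0" "?cb > 0" using i' j' by (auto intro: gr0I)
  have e1: "i div ?rc div ?rb = i div (?rb * ?rc)" by (metis div_mult2_eq mult.commute)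
  have e2: "i mod (?rb * ?rc) div ?rc = i div ?rc mod ?rb" using rc by (intro mod_mult_div) auto
  have e3: "i mod (?rb * ?rc) mod ?rc = i mod ?rc" by (rule mod_mult_mod)
  have f1: "j div ?cc div ?cb = j div (?cb * ?cc)" by (metis div_mult2_eq mult.commute)
  have f2: "j mod (?cb * ?cc) div ?cc = j div ?cc mod ?cb" using rc by (intro mod_mult_div) auto
  have f3: "j mod (?cb * ?cc) mod ?cc = j mod ?cc" by (rule mod_mult_mod)
  have l1: "i div ?rc < ?ra * ?rb" using i' rc by (simp add: less_mult_imp_div_less)
  have l2: "j div ?cc < ?ca * ?cb" using j' rc by (simp add: less_mult_imp_div_less)
  have l3: "i mod (?rb * ?rc) < ?rb * ?rc" using rc by simp
  have l4: "j mod (?cb * ?cc) < ?cb * ?cc" using rc by simp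
  show "kron (kron A B) C $$ (i, j) = kron A (kron B C) $$ (i, j)"
    using i' j' l1 l2 l3 l4 rc by (simp add: e1 e2 e3 f1 f2 f3 mult.assoc)
qed (auto simp: mult.assoc)

lemma tr_kron: assumes "A \<in> carrier_mat a a" "B \<in> carrier_mat b b"
  shows "tr (kron A B) = tr A * tr B"
proof -
  have "tr (kron A B) = (\<Sum>l<a*b. kron A B $$ (l,l))"
    unfolding tr_def using assms by simp
  also have "\<dots> = (\<Sum>p<a. \<Sum>q<b. kron A B $$ (p*b+q, p*b+q))"
    by (rule sum_mult_index)
  also have "\<dots> = (\<Sum>p<a. \<Sum>q<b. A $$ (p,p) * B $$ (q,q))"
  proof (intro sum.cong refl)
    fix p q assume p: "p \<in> {..<a}" and q: "q \<in> {..<b}"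
    have l: "p*b+q < a*b"
    proof -
      have "p*b+q < Suc p * b" using q by simp
      also have "\<dots> \<le> a*b" using p by (intro mult_le_mono1) simp
      finally show ?thesis .
    qed
    show "kron A B $$ (p*b+q, p*b+q) = A $$ (p,p) * B $$ (q,q)" using assms l q by (simp add: div_mod_lt)
  qed
  also have "\<dots> = tr A * tr B" unfolding tr_def using assms by (simp add: sum_product)
  finally show ?thesis .
qed

lemma tr_smult: "A \<in> carrier_mat k k \<Longrightarrow> tr (c \<cdot>\<^sub>m A) = c * tr A"
  unfolding tr_def by (auto simp: sum_distrib_left intro: sum.cong)

lemma tr_one: "tr (1\<^sub>m n) = of_nat n"
  unfolding tr_def by simp


definition xp :: "bool \<times> bool \<Rightarrow> bool \<times> bool \<Rightarrow> bool \<times> bool" where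
  "xp p q = (fst p \<noteq> fst q, snd p \<noteq> snd q)"

definition ph1 :: "bool \<times> bool \<Rightarrow> bool \<times> bool \<Rightarrow> complex" where
  "ph1 p q = (if p = (True,False) \<and> q = (True,True) then \<i>
     else if p = (True,False) \<and> q = (False,True) then -\<i>
     else if p = (True,True) \<and> q = (True,False) then -\<i>
     else if p = (True,True) \<and> q = (False,True) then \<i>
     else if p = (False,True) \<and> q = (True,False) then \<i>
     else if p = (False,True) \<and> q = (True,True) then -\<i> else 1)"

definition pe :: "bool \<times> bool \<Rightarrow> nat \<Rightarrow> nat \<Rightarrow> complex" where
  "pe p i j = (case p of
      (False, False) \<Rightarrow> (if i = j then 1 else 0)
    | (True, False)  \<Rightarrow> (if i = j then 0 else 1)
    | (False, True)  \<Rightarrow> (if i = j then (if i = 0 then 1 else -1) else 0)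
    | (True, True)   \<Rightarrow> (if i = j then 0 else if i = 0 then -\<i> else \<i>))"

lemma less2: "(i::nat) < 2 \<longleftrightarrow> i = 0 \<or> i = 1" by auto

lemma pauli1_mat: "pauli1 p = mat 2 2 (\<lambda>(i,j). pe p i j)"
  by (rule eq_matI) (auto simp: pauli1_def pe_def mat_of_rows_list_def less2 split: prod.splits bool.splits)

lemma pauli1_carrier[simp]: "pauli1 p \<in> carrier_mat 2 2"
  by (simp add: pauli1_mat)

lemma pauli1_dims[simp]: "dim_row (pauli1 p) = 2" "dim_col (pauli1 p) = 2"
  by (simp_all add: pauli1_mat)

lemma sum2: "(\<Sum>i<2::nat. f i) = f 0 + f 1"
  by (simp add: numeral_2_eq_2)

lemma mat2_mult_index: "i < 2 \<Longrightarrow> j < 2 \<Longrightarrow> (mat 2 2 f * mat 2 2 g) $$ (i,j) = f (i,0) * g (0,j) + f (i,1) * g (1,j)"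
  by (simp add: scalar_prod_def numeral_2_eq_2)

lemma mat2_eqI: "A \<in> carrier_mat 2 2 \<Longrightarrow> B \<in> carrier_mat 2 2 \<Longrightarrow> A $$ (0,0) = B $$ (0,0) \<Longrightarrow> A $$ (0,1) = B $$ (0,1)
  \<Longrightarrow> A $$ (1,0) = B $$ (1,0) \<Longrightarrow> A $$ (1,1) = B $$ (1,1) \<Longrightarrow> A = B"
  by (rule eq_matI) (auto simp: less2)

lemma pauli1_mult: "pauli1 p * pauli1 q = ph1 p q \<cdot>\<^sub>m pauli1 (xp p q)"
proof -
  obtain a b c d where pq: "p = (a,b)" "q = (c,d)" by (cases p, cases q) auto
  show ?thesis unfolding pauli1_mat pq
    by (cases a; cases b; cases c; cases d) (auto intro!: mat2_eqI simp: scalar_prod_def numeral_2_eq_2 pe_def ph1_def xp_def)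
qed

fun phl :: "(bool \<times> bool) list \<Rightarrow> (bool \<times> bool) list \<Rightarrow> complex" where
  "phl (p # l) (q # l') = ph1 p q * phl l l'"
| "phl _ _ = 1"

definition xl :: "(bool \<times> bool) list \<Rightarrow> (bool \<times> bool) list \<Rightarrow> (bool \<times> bool) list" where
  "xl l l' = map (\<lambda>(p,q). xp p q) (zip l l')"

lemma xl_Cons[simp]: "xl (p # l) (q # l') = xp p q # xl l l'" "xl [] l' = []"
  by (simp_all add: xl_def)

lemma length_xl[simp]: "length (xl l l') = min (length l) (length l')"
  by (simp add: xl_def)

lemma nth_xl[simp]: "i < length l \<Longrightarrow> i < length l' \<Longrightarrow> xl l l' ! i = xp (l ! i) (l' ! i)"
  by (simp add: xl_def)

lemma pauli_dims[simp]: "dim_row (pauli_mat l) = 2 ^ length l" "dim_col (pauli_mat l) = 2 ^ length l"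
  by (induct l) auto

lemma pauli_carrier[simp]: "pauli_mat l \<in> carrier_mat (2 ^ length l) (2 ^ length l)"
  by (rule carrier_matI) (simp_all only: pauli_dims)

lemma one_smult_mat'[simp]: "(1::complex) \<cdot>\<^sub>m A = A" by (rule eq_matI) auto

lemma kron_one_Suc0_left[simp]: "kron (1\<^sub>m (Suc 0)) B = B"
  using kron_one_1_left by simp

lemma smult_smult_mat: "a \<cdot>\<^sub>m (b \<cdot>\<^sub>m A) = (a * b :: complex) \<cdot>\<^sub>m A"
  by (rule eq_matI) auto

lemma ph1_nz: "ph1 p q \<noteq> 0" by (simp add: ph1_def)

lemma phl_nz: "phl l l' \<noteq> 0"
  by (induct l l' rule: phl.induct) (auto simp: ph1_nz)

lemma pauli_mult: "length l = length l' \<Longrightarrow> pauli_mat l * pauli_mat l' = phl l l' \<cdot>\<^sub>m pauli_mat (xl l l')"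
proof (induct l arbitrary: l')
  case Nil
  then show ?case by simp
next
  case (Cons p l)
  then obtain q l2 where l': "l' = q # l2" and len: "length l = length l2" by (cases l') auto
  have c2: "pauli_mat l2 \<in> carrier_mat (2^length l) (2^length l)" using len by simp
  have "pauli_mat (p # l) * pauli_mat l' = kron (pauli1 p * pauli1 q) (pauli_mat l * pauli_mat l2)"
    unfolding l' using kron_mult[OF pauli1_carrier pauli_carrier pauli1_carrier c2] by simp
  also have "\<dots> = kron (ph1 p q \<cdot>\<^sub>m pauli1 (xp p q)) (phl l l2 \<cdot>\<^sub>m pauli_mat (xl l l2))"
    using Cons(1)[OF len] by (simp add: pauli1_mult)
  also have "\<dots> = phl (p # l) l' \<cdot>\<^sub>m pauli_mat (xl (p # l) l')"
    unfolding l' by (simp add: kron_smult_left kron_smult_right smult_smult_mat mult.commute)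
  finally show ?case .
qed

lemma pauli1_id: "pauli1 (False, False) = 1\<^sub>m 2"
  by (rule eq_matI) (auto simp: pauli1_mat pe_def)

lemma pauli_id: "pauli_mat (replicate k (False, False)) = 1\<^sub>m (2 ^ k)"
  by (induct k) (auto simp: pauli1_id kron_one_one)

lemma pauli_id': "set l \<subseteq> {(False,False)} \<Longrightarrow> pauli_mat l = 1\<^sub>m (2 ^ length l)"
proof -
  assume "set l \<subseteq> {(False,False)}"
  then have "\<forall>y\<in>set l. y = (False, False)" by auto
  then have "l = replicate (length l) (False, False)"
    by (simp add: replicate_length_same)
  then show ?thesis by (metis pauli_id)
qed

lemma tr_pauli1: "tr (pauli1 p) = (if p = (False, False) then 2 else 0)"
  by (cases p) (auto simp: tr_def pauli1_mat pe_def sum2 split: bool.splits)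

lemma tr_pauli: "tr (pauli_mat l) = (if set l \<subseteq> {(False,False)} then 2 ^ length l else 0)"
proof (induct l)
  case Nil
  then show ?case by (simp add: tr_def)
next
  case (Cons p l)
  show ?case by (simp add: tr_kron[OF pauli1_carrier pauli_carrier] Cons tr_pauli1)
qed

lemma xp_self[simp]: "xp p p = (False, False)" by (simp add: xp_def)
lemma ph1_self[simp]: "ph1 p p = 1" by (cases p) (auto simp: ph1_def)

lemma phl_self[simp]: "phl l l = 1" by (induct l) auto

lemma xl_self: "set (xl l l) \<subseteq> {(False,False)}" by (induct l) auto

lemma pauli_sq: "pauli_mat l * pauli_mat l = 1\<^sub>m (2 ^ length l)"
  by (simp add: pauli_mult pauli_id'[OF xl_self])

lemma xp_zero_iff: "xp p q = (False, False) \<longleftrightarrow> p = q"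
  by (cases p; cases q) (auto simp: xp_def)

lemma xl_zero_iff: "length l = length l' \<Longrightarrow> set (xl l l') \<subseteq> {(False,False)} \<longleftrightarrow> l = l'"
proof (induct l arbitrary: l')
  case (Cons p l)
  then obtain q l2 where "l' = q # l2" "length l = length l2" by (cases l') auto
  then show ?case using Cons(1) by (auto simp: xp_zero_iff)
qed simp

lemma tr_pauli_mult: "length l = length l' \<Longrightarrow> tr (pauli_mat l * pauli_mat l') = (if l = l' then 2 ^ length l else 0)"
proof -
  assume len: "length l = length l'"
  show ?thesis
  proof (cases "l = l'")
    case True
    then show ?thesis by (simp add: pauli_sq tr_one)
  next
    case False
    have "tr (pauli_mat l * pauli_mat l') = phl l l' * tr (pauli_mat (xl l l'))"
      using len by (simp add: pauli_mult tr_smult[OF pauli_carrier])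
    also have "tr (pauli_mat (xl l l')) = 0" using False len by (simp add: tr_pauli xl_zero_iff)
    finally show ?thesis using False by simp
  qed
qed

lemma pauli_append: "pauli_mat (a @ b) = kron (pauli_mat a) (pauli_mat b)"
  by (induct a) (simp_all add: kron_one_1_left kron_assoc)


definition msum :: "nat \<Rightarrow> nat \<Rightarrow> ('a \<Rightarrow> complex mat) \<Rightarrow> 'a set \<Rightarrow> complex mat" where
  "msum r c f A = mat r c (\<lambda>(i,j). \<Sum>x\<in>A. f x $$ (i,j))"

lemma msum_carrier[simp]: "msum r c f A \<in> carrier_mat r c"
  and msum_dims[simp]: "dim_row (msum r c f A) = r" "dim_col (msum r c f A) = c"
  by (auto simp: msum_def)

lemma msum_index[simp]: "i < r \<Longrightarrow> j < c \<Longrightarrow> msum r c f A $$ (i,j) = (\<Sum>x\<in>A. f x $$ (i,j))"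
  by (simp add: msum_def)

lemma msum_cong: "(\<And>x. x \<in> A \<Longrightarrow> f x = g x) \<Longrightarrow> msum r c f A = msum r c g A"
  unfolding msum_def by (auto intro!: cong_mat sum.cong)

lemma msum_empty[simp]: "msum r c f {} = 0\<^sub>m r c"
  by (rule eq_matI) auto

lemma msum_insert: "finite A \<Longrightarrow> x \<notin> A \<Longrightarrow> f x \<in> carrier_mat r c \<Longrightarrow>
  msum r c f (insert x A) = f x + msum r c f A"
  by (rule eq_matI) auto

lemma mult_index': "A \<in> carrier_mat r s \<Longrightarrow> B \<in> carrier_mat s c \<Longrightarrow> i < r \<Longrightarrow> j < c \<Longrightarrow>
  (A * B) $$ (i,j) = (\<Sum>l<s. A $$ (i,l) * B $$ (l,j))"
  by (simp add: scalar_prod_def atLeast0LessThan)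

lemma mult_msum_left: assumes "A \<in> carrier_mat r s" "\<And>x. x \<in> S \<Longrightarrow> f x \<in> carrier_mat s c"
  shows "A * msum s c f S = msum r c (\<lambda>x. A * f x) S"
proof (rule eq_matI)
  fix i j assume "i < dim_row (msum r c (\<lambda>x. A * f x) S)" "j < dim_col (msum r c (\<lambda>x. A * f x) S)"
  then have ij: "i < r" "j < c" by auto
  have "(A * msum s c f S) $$ (i,j) = (\<Sum>l<s. A $$ (i,l) * (\<Sum>x\<in>S. f x $$ (l,j)))"
    using assms ij by (simp add: scalar_prod_def atLeast0LessThan)
  also have "\<dots> = (\<Sum>x\<in>S. \<Sum>l<s. A $$ (i,l) * f x $$ (l,j))"
    by (simp add: sum_distrib_left sum.swap[of _ S])
  also have "\<dots> = msum r c (\<lambda>x. A * f x) S $$ (i,j)"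
    using ij by (simp, intro sum.cong refl, subst mult_index'[OF assms(1) assms(2)]) (auto simp: ij)
  finally show "(A * msum s c f S) $$ (i,j) = msum r c (\<lambda>x. A * f x) S $$ (i,j)" .
qed (insert assms, auto)

lemma mult_msum_right: assumes "B \<in> carrier_mat s c" "\<And>x. x \<in> S \<Longrightarrow> f x \<in> carrier_mat r s"
  shows "msum r s f S * B = msum r c (\<lambda>x. f x * B) S"
proof (rule eq_matI)
  fix i j assume "i < dim_row (msum r c (\<lambda>x. f x * B) S)" "j < dim_col (msum r c (\<lambda>x. f x * B) S)"
  then have ij: "i < r" "j < c" by auto
  have "(msum r s f S * B) $$ (i,j) = (\<Sum>l<s. (\<Sum>x\<in>S. f x $$ (i,l)) * B $$ (l,j))"
    using assms ij by (simp add: scalar_prod_def atLeast0LessThan)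
  also have "\<dots> = (\<Sum>x\<in>S. \<Sum>l<s. f x $$ (i,l) * B $$ (l,j))"
    by (simp add: sum_distrib_right sum.swap[of _ S])
  also have "\<dots> = msum r c (\<lambda>x. f x * B) S $$ (i,j)"
    using ij by (simp, intro sum.cong refl, subst mult_index'[OF assms(2) assms(1)]) (auto simp: ij)
  finally show "(msum r s f S * B) $$ (i,j) = msum r c (\<lambda>x. f x * B) S $$ (i,j)" .
qed (insert assms, auto)

lemma smult_msum: "(\<And>x. x \<in> S \<Longrightarrow> f x \<in> carrier_mat r c) \<Longrightarrow>
  a \<cdot>\<^sub>m msum r c f S = msum r c (\<lambda>x. a \<cdot>\<^sub>m f x) S"
proof (rule eq_matI)
  fix i j assume fc: "\<And>x. x \<in> S \<Longrightarrow> f x \<in> carrier_mat r c" and i: "i < dim_row (msum r c (\<lambda>x. a \<cdot>\<^sub>m f x) S)"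
    and j: "j < dim_col (msum r c (\<lambda>x. a \<cdot>\<^sub>m f x) S)"
  have "(a \<cdot>\<^sub>m f x) $$ (i,j) = a * f x $$ (i,j)" if "x \<in> S" for x
    using fc[OF that] i j by auto
  then show "(a \<cdot>\<^sub>m msum r c f S) $$ (i, j) = msum r c (\<lambda>x. a \<cdot>\<^sub>m f x) S $$ (i, j)"
    using i j by (simp add: sum_distrib_left)
qed auto

lemma tr_msum: assumes "\<And>x. x \<in> S \<Longrightarrow> f x \<in> carrier_mat r r"
  shows "tr (msum r r f S) = (\<Sum>x\<in>S. tr (f x))"
  unfolding tr_def using assms by (auto simp: sum.swap[of _ S] intro!: sum.cong)

locale mspace = fixes N :: nat

sublocale mspace \<subseteq> VS: vectorspace class_ring "module_mat TYPE(complex) N N"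
  by (rule matrix_vs)

context mspace
begin

lemma span_add: "S \<subseteq> carrier_mat N N \<Longrightarrow> x \<in> VS.span S \<Longrightarrow> y \<in> VS.span S \<Longrightarrow> x + y \<in> VS.span S"
proof -
  assume S: "S \<subseteq> carrier_mat N N" and xy: "x \<in> VS.span S" "y \<in> VS.span S"
  have "submodule class_ring (VS.span S) (module_mat TYPE(complex) N N)"
    using S by (intro VS.span_is_submodule) (simp add: module_mat_simps)
  then have "x \<oplus>\<^bsub>module_mat TYPE(complex) N N\<^esub> y \<in> VS.span S"
    using xy by (simp add: submodule_def subgroup_def)
  then show ?thesis by (simp add: module_mat_simps)
qed

lemma span_smult: "S \<subseteq> carrier_mat N N \<Longrightarrow> x \<in> VS.span S \<Longrightarrow> a \<cdot>\<^sub>m x \<in> VS.span S"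
proof -
  assume S: "S \<subseteq> carrier_mat N N" and x: "x \<in> VS.span S"
  have "submodule class_ring (VS.span S) (module_mat TYPE(complex) N N)"
    using S by (intro VS.span_is_submodule) (simp add: module_mat_simps)
  then have "a \<odot>\<^bsub>module_mat TYPE(complex) N N\<^esub> x \<in> VS.span S"
    using x by (simp add: submodule_def)
  then show ?thesis by (simp add: module_mat_simps)
qed

lemma span_zero: "S \<subseteq> carrier_mat N N \<Longrightarrow> 0\<^sub>m N N \<in> VS.span S"
proof -
  assume S: "S \<subseteq> carrier_mat N N"
  have "submodule class_ring (VS.span S) (module_mat TYPE(complex) N N)"
    using S by (intro VS.span_is_submodule) (simp add: module_mat_simps)
  then have "\<zero>\<^bsub>module_mat TYPE(complex) N N\<^esub> \<in> VS.span S"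
    by (simp add: submodule_def subgroup_def)
  then show ?thesis by (simp add: module_mat_simps)
qed

lemma span_gen: "S \<subseteq> carrier_mat N N \<Longrightarrow> x \<in> S \<Longrightarrow> x \<in> VS.span S"
  using VS.in_own_span[of S] by (auto simp: module_mat_simps)

lemma span_msum: assumes S: "S \<subseteq> carrier_mat N N" and A: "finite A"
  and f: "\<And>x. x \<in> A \<Longrightarrow> f x \<in> VS.span S"
  shows "msum N N f A \<in> VS.span S"
  using A f
proof (induct A rule: finite_induct)
  case empty
  then show ?case using span_zero[OF S] by simp
next
  case (insert x F)
  have sub: "VS.span S \<subseteq> carrier_mat N N"
    using VS.span_is_subset2[of S] S by (simp add: module_mat_simps)
  have "f x \<in> carrier_mat N N" using insert sub by auto
  then show ?case using insert by (simp add: msum_insert span_add[OF S])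
qed

lemma span_carrier: "S \<subseteq> carrier_mat N N \<Longrightarrow> VS.span S \<subseteq> carrier_mat N N"
  using VS.span_is_subset2[of S] by (simp add: module_mat_simps)

lemma span_mono: assumes S: "S \<subseteq> carrier_mat N N" and T: "T \<subseteq> carrier_mat N N" and ST: "S \<subseteq> VS.span T"
  shows "VS.span S \<subseteq> VS.span T"
proof -
  have "submodule class_ring (VS.span T) (module_mat TYPE(complex) N N)"
    using T by (intro VS.span_is_submodule) (simp add: module_mat_simps)
  then show ?thesis using VS.span_is_subset[OF ST] by simp
qed

abbreviation "VV \<equiv> module_mat TYPE(complex) N N"

lemma span_vs: "S \<subseteq> carrier_mat N N \<Longrightarrow> vectorspace class_ring (VS.vs (VS.span S))"
  by (rule VS.subspace_is_vs, rule VS.span_is_subspace) (simp add: module_mat_simps)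

lemma span_submod: "S \<subseteq> carrier_mat N N \<Longrightarrow> submodule class_ring (VS.span S) VV"
  by (intro VS.span_is_submodule) (simp add: module_mat_simps)

lemma span_in_sub: "S \<subseteq> carrier_mat N N \<Longrightarrow> A \<subseteq> VS.span S \<Longrightarrow>
  LinearCombinations.module.span class_ring (VS.vs (VS.span S)) A = VS.span A"
  using VS.span_li_not_depend(1)[OF _ span_submod] by simp

lemma lindep_in_sub: "S \<subseteq> carrier_mat N N \<Longrightarrow> A \<subseteq> VS.span S \<Longrightarrow>
  LinearCombinations.module.lin_dep class_ring (VS.vs (VS.span S)) A = VS.lin_dep A"
  using VS.span_li_not_depend(2)[OF _ span_submod] by simp

lemma dim_span_le: assumes S: "S \<subseteq> carrier_mat N N" "finite S" and T: "T \<subseteq> carrier_mat N N" "finite T"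
  and ST: "S \<subseteq> VS.span T"
  shows "vectorspace.dim class_ring (VS.vs (VS.span S)) \<le> card T"
proof -
  interpret WS: vectorspace class_ring "VS.vs (VS.span S)" by (rule span_vs[OF S(1)])
  interpret WT: vectorspace class_ring "VS.vs (VS.span T)" by (rule span_vs[OF T(1)])
  have SinS: "S \<subseteq> VS.span S" using span_gen[OF S(1)] by auto
  have "WS.fin_dim" unfolding WS.fin_dim_def
    using S SinS span_in_sub[OF S(1) SinS] by (intro exI[of _ S]) auto
  then obtain \<beta> where \<beta>: "finite \<beta>" "WS.basis \<beta>" using WS.finite_basis_exists by blast
  have bS: "\<beta> \<subseteq> VS.span S" using \<beta>(2) unfolding WS.basis_def by simp
  have li: "\<not> VS.lin_dep \<beta>" using \<beta>(2) lindep_in_sub[OF S(1) bS] unfolding WS.basis_def by simp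
  have bT: "\<beta> \<subseteq> VS.span T" using bS span_mono[OF S(1) T(1) ST] by auto
  have TinT: "T \<subseteq> VS.span T" using span_gen[OF T(1)] by auto
  have "card \<beta> \<le> card T"
    by (rule WT.li_smaller_than_gen[OF \<beta>(1) T(2)])
      (use bT TinT li lindep_in_sub[OF T(1) bT] span_in_sub[OF T(1) TinT] in auto)
  moreover have "WS.dim = card \<beta>" by (rule WS.dim_basis[OF \<beta>])
  ultimately show ?thesis by simp
qed

lemma dim_span_li: assumes T: "T \<subseteq> carrier_mat N N" "finite T" and li: "\<not> VS.lin_dep T"
  shows "vectorspace.dim class_ring (VS.vs (VS.span T)) = card T"
proof -
  interpret WT: vectorspace class_ring "VS.vs (VS.span T)" by (rule span_vs[OF T(1)])
  have TinT: "T \<subseteq> VS.span T" using span_gen[OF T(1)] by auto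
  have "WT.basis T" unfolding WT.basis_def
    using TinT li lindep_in_sub[OF T(1) TinT] span_in_sub[OF T(1) TinT] by auto
  then show ?thesis by (rule WT.dim_basis[OF T(2)])
qed

lemma lincomb_msum: assumes A: "finite A" "A \<subseteq> carrier_mat N N"
  shows "VS.lincomb a A = msum N N (\<lambda>v. a v \<cdot>\<^sub>m v) A"
  using A
proof (induct A rule: finite_induct)
  case empty
  then show ?case by (simp add: VS.lincomb_def module_mat_simps)
next
  case (insert x F)
  have "VS.lincomb a (insert x F) = a x \<cdot>\<^sub>m x + VS.lincomb a F"
    unfolding VS.lincomb_def using insert
    by (subst VS.finsum_insert) (auto simp: module_mat_simps)
  then show ?case using insert by (simp add: msum_insert)
qed

lemma li_dual: assumes T: "finite T" "T \<subseteq> carrier_mat N N"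
  and g: "\<And>v. v \<in> T \<Longrightarrow> g v \<in> carrier_mat N N"
  and d: "\<And>v w. v \<in> T \<Longrightarrow> w \<in> T \<Longrightarrow> tr (g w * v) = (if v = w then 1 else 0)"
  shows "\<not> VS.lin_dep T"
proof
  assume "VS.lin_dep T"
  then obtain A a v where A: "finite A" "A \<subseteq> T" and lc: "VS.lincomb a A = 0\<^sub>m N N"
    and v: "v \<in> A" and av: "a v \<noteq> 0"
    unfolding VS.lin_dep_def by (auto simp: module_mat_simps)
  have AC: "A \<subseteq> carrier_mat N N" using A T by auto
  have "tr (g v * VS.lincomb a A) = tr (g v * msum N N (\<lambda>u. a u \<cdot>\<^sub>m u) A)"
    by (simp add: lincomb_msum[OF A(1) AC])
  also have "\<dots> = tr (msum N N (\<lambda>u. g v * (a u \<cdot>\<^sub>m u)) A)"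
    using g[of v] v A AC by (subst mult_msum_left[of _ N N]) auto
  also have "\<dots> = (\<Sum>u\<in>A. tr (g v * (a u \<cdot>\<^sub>m u)))"
    using g[of v] v A AC by (subst tr_msum) (auto intro!: mult_carrier_mat[of _ N N _ N])
  also have "\<dots> = (\<Sum>u\<in>A. a u * tr (g v * u))"
  proof (intro sum.cong refl)
    fix u assume u: "u \<in> A"
    have gv: "g v \<in> carrier_mat N N" using g v A by auto
    have uc: "u \<in> carrier_mat N N" using u AC by auto
    show "tr (g v * (a u \<cdot>\<^sub>m u)) = a u * tr (g v * u)"
      using mult_smult_distrib[OF gv uc] tr_smult[of "g v * u" N] gv uc by simp
  qed
  also have "\<dots> = (\<Sum>u\<in>A. if u = v then a u else 0)"
    using d v A by (intro sum.cong refl) (auto simp: subset_iff)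
  also have "\<dots> = a v" using A v by simp
  finally have "a v = tr (g v * 0\<^sub>m N N)" using lc by simp
  also have "\<dots> = 0"
  proof -
    have gv: "g v \<in> carrier_mat N N" using g v A by auto
    then have "g v * 0\<^sub>m N N = 0\<^sub>m N N" by simp
    then show ?thesis by (simp add: tr_def)
  qed
  finally show False using av by simp
qed

end


lemma tr_comm: "X \<in> carrier_mat r s \<Longrightarrow> Y \<in> carrier_mat s r \<Longrightarrow> tr (X * Y) = tr (Y * X)"
  unfolding tr_def by (simp add: scalar_prod_def atLeast0LessThan sum.swap[of _ "{..<s}"] mult.commute)

lemma char_poly_tri: assumes B: "B \<in> carrier_mat d d" and ut: "upper_triangular B"
  shows "char_poly B = (\<Prod>i\<in>{0..<d}. [:- B $$ (i,i), 1:])"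
proof -
  have "char_poly B = prod_list (map (\<lambda>i. [:- B $$ (i,i), 1:]) [0..<d])"
    using char_poly_upper_triangular[OF B ut] B by (simp add: diag_mat_def o_def)
  also have "\<dots> = (\<Prod>i\<in>{0..<d}. [:- B $$ (i,i), 1:])"
    by (subst prod.distinct_set_conv_list[symmetric]) auto
  finally show ?thesis .
qed

lemma entropy_scaled_proj:
  fixes A :: "complex mat" and c :: real
  assumes A: "A \<in> carrier_mat d d" and sq: "A * A = complex_of_real c \<cdot>\<^sub>m A" and trA: "tr A = 1" and c: "c > 0"
  shows "von_neumann_entropy A = - log 2 c"
proof -
  obtain es where "char_poly A = (\<Prod>a\<leftarrow>es. [:- a, 1:])" using char_poly_factorized[OF A] by blast
  from schur_decomposition_exists[OF A this] obtain B where B: "B \<in> carrier_mat d d"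
    and ut: "upper_triangular B" and sim: "similar_mat A B" by blast
  from similar_matD[OF sim] obtain n P Q where PQ0: "{A,B,P,Q} \<subseteq> carrier_mat n n"
    "P * Q = 1\<^sub>m n" "Q * P = 1\<^sub>m n" and AB: "A = P * B * Q" by blast
  have nd: "n = d" using PQ0(1) A by (auto dest: carrier_matD)
  have PQ: "P \<in> carrier_mat d d" "Q \<in> carrier_mat d d" "P * Q = 1\<^sub>m d" "Q * P = 1\<^sub>m d"
    using PQ0 nd by auto
  have BA: "B = Q * A * P"
  proof -
    have "Q * A * P = (Q * P) * B * (Q * P)"
      unfolding AB using PQ(1,2) B by (simp add: assoc_mult_mat[of _ d d _ d _ d])
    also have "\<dots> = B" using PQ B by simp
    finally show ?thesis by simp
  qed
  have BB: "B * B = complex_of_real c \<cdot>\<^sub>m B"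
  proof -
    have "B * B = Q * A * (P * Q) * A * P" unfolding BA
      using PQ(1,2) A by (simp add: assoc_mult_mat[of _ d d _ d _ d])
    also have "\<dots> = Q * A * A * P" using PQ A by simp
    also have "\<dots> = Q * (A * A) * P" using PQ(1,2) A by (simp add: assoc_mult_mat[of _ d d _ d _ d])
    also have "\<dots> = complex_of_real c \<cdot>\<^sub>m B" unfolding sq BA
      using PQ(1,2) A by (simp add: mult_smult_distrib[of _ d d] mult_smult_assoc_mat[of _ d d] assoc_mult_mat[of _ d d _ d _ d])
    finally show ?thesis .
  qed
  have trB: "tr B = 1"
  proof -
    have "tr B = tr (Q * (A * P))" unfolding BA using PQ A by (simp add: assoc_mult_mat[of _ d d _ d _ d])
    also have "\<dots> = tr ((A * P) * Q)" using PQ A by (intro tr_comm[of _ d d]) auto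
    also have "\<dots> = tr A" using PQ A by (simp add: assoc_mult_mat[of _ d d _ d _ d])
    finally show ?thesis using trA by simp
  qed
  have diag: "B $$ (i,i) = complex_of_real c \<or> B $$ (i,i) = 0" if i: "i < d" for i
  proof -
    have "(B * B) $$ (i,i) = (\<Sum>l<d. B $$ (i,l) * B $$ (l,i))" using mult_index'[OF B B i i] .
    also have "\<dots> = (\<Sum>l<d. if l = i then B $$ (i,i) * B $$ (i,i) else 0)"
    proof (intro sum.cong refl)
      fix l assume l: "l \<in> {..<d}"
      have "l < i \<Longrightarrow> B $$ (i,l) = 0" using ut i B unfolding upper_triangular_def by auto
      moreover have "i < l \<Longrightarrow> B $$ (l,i) = 0" using ut l B unfolding upper_triangular_def by auto
      ultimately show "B $$ (i,l) * B $$ (l,i) = (if l = i then B $$ (i,i) * B $$ (i,i) else 0)"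
        by (cases "l < i"; cases "i < l") auto
    qed
    also have "\<dots> = B $$ (i,i) * B $$ (i,i)" using i by simp
    finally have "B $$ (i,i) * B $$ (i,i) = complex_of_real c * B $$ (i,i)" using BB B i by auto
    then show ?thesis by (metis mult_cancel_right mult_zero_left)
  qed
  define I1 where "I1 = {i \<in> {0..<d}. B $$ (i,i) = complex_of_real c}"
  define I0 where "I0 = {i \<in> {0..<d}. B $$ (i,i) \<noteq> complex_of_real c}"
  have I01: "{0..<d} = I1 \<union> I0" "I1 \<inter> I0 = {}" "finite I1" "finite I0" unfolding I1_def I0_def by auto
  have I0z: "i \<in> I0 \<Longrightarrow> B $$ (i,i) = 0" for i using diag unfolding I0_def by auto
  define r where "r = card I1"
  have "tr B = (\<Sum>i\<in>I1 \<union> I0. B $$ (i,i))" unfolding tr_def I01(1)[symmetric] using B by (simp add: atLeast0LessThan)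
  also have "\<dots> = (\<Sum>i\<in>I1. B $$ (i,i)) + (\<Sum>i\<in>I0. B $$ (i,i))" using I01 by (simp add: sum.union_disjoint)
  also have "\<dots> = of_nat r * complex_of_real c" unfolding r_def using I0z by (simp add: I1_def)
  finally have rc: "real r * c = 1" using trB by (metis of_real_eq_1_iff of_real_mult of_real_of_nat_eq)
  have cpA: "char_poly A = [:- complex_of_real c, 1:] ^ r * [:0, 1:] ^ card I0"
  proof -
    have "char_poly A = char_poly B" by (rule char_poly_similar[OF sim])
    also have "\<dots> = (\<Prod>i\<in>I1 \<union> I0. [:- B $$ (i,i), 1:])" unfolding I01(1)[symmetric] by (rule char_poly_tri[OF B ut])
    also have "\<dots> = (\<Prod>i\<in>I1. [:- B $$ (i,i), 1:]) * (\<Prod>i\<in>I0. [:- B $$ (i,i), 1:])" using I01 by (simp add: prod.union_disjoint)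
    also have "\<dots> = [:- complex_of_real c, 1:] ^ r * [:0, 1:] ^ card I0" unfolding r_def using I0z by (simp add: I1_def)
    finally show ?thesis .
  qed
  have cnz: "complex_of_real c \<noteq> 0" using c by simp
  have nz: "char_poly A \<noteq> 0" unfolding cpA by simp
  have roots: "{e. poly (char_poly A) e = 0} \<subseteq> {complex_of_real c, 0}" unfolding cpA by auto
  have rpos: "r > 0" using rc by (cases r) auto
  have croot: "complex_of_real c \<in> {e. poly (char_poly A) e = 0}" unfolding cpA using rpos by (simp add: zero_power)
  have ordc: "order (complex_of_real c) (char_poly A) = r"
    unfolding cpA using cnz
    by (subst order_mult) (auto simp: order_power_n_n intro!: order_0I)
  have "(\<Sum>e\<in>{e. poly (char_poly A) e = 0}. real (order e (char_poly A)) * (Re e * log 2 (Re e)))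
      = (\<Sum>e\<in>{complex_of_real c}. real (order e (char_poly A)) * (Re e * log 2 (Re e)))"
  proof (rule sum.mono_neutral_right)
    show "finite {e. poly (char_poly A) e = 0}" using roots finite_subset by blast
    show "{complex_of_real c} \<subseteq> {e. poly (char_poly A) e = 0}" using croot by simp
    show "\<forall>i\<in>{e. poly (char_poly A) e = 0} - {complex_of_real c}. real (order i (char_poly A)) * (Re i * log 2 (Re i)) = 0"
      using roots by auto
  qed
  also have "\<dots> = real r * (c * log 2 c)" using ordc by simp
  also have "\<dots> = log 2 c" using rc by (simp add: mult.assoc[symmetric])
  finally show ?thesis unfolding von_neumann_entropy_def by simp
qed


definition symd :: "'a set \<Rightarrow> 'a set \<Rightarrow> 'a set" where "symd S T = (S - T) \<union> (T - S)"

lemma card_split_Int: "finite X \<Longrightarrow> card (X - Y) + card (X \<inter> Y) = card X"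
proof -
  assume f: "finite X"
  have "X = (X - Y) \<union> (X \<inter> Y)" by auto
  then have "card X = card ((X - Y) \<union> (X \<inter> Y))" by simp
  also have "\<dots> = card (X - Y) + card (X \<inter> Y)" using f by (intro card_Un_disjoint) auto
  finally show ?thesis by simp
qed

lemma card_symd: "finite X \<Longrightarrow> finite Y \<Longrightarrow> card (symd X Y) + 2 * card (X \<inter> Y) = card X + card Y"
proof -
  assume f: "finite X" "finite Y"
  have "card (symd X Y) = card (X - Y) + card (Y - X)" unfolding symd_def
    using f by (intro card_Un_disjoint) auto
  moreover have "card (X - Y) + card (X \<inter> Y) = card X" using f(1) by (rule card_split_Int)
  moreover have "card (Y - X) + card (Y \<inter> X) = card Y" using f(2) by (rule card_split_Int)
  moreover have "Y \<inter> X = X \<inter> Y" by auto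
  ultimately show ?thesis by simp
qed

lemma odd_card_symd: "finite X \<Longrightarrow> finite Y \<Longrightarrow> odd (card (symd X Y)) = (odd (card X) \<noteq> odd (card Y))"
proof -
  assume f: "finite X" "finite Y"
  have "card (symd X Y) + 2 * card (X \<inter> Y) = card X + card Y" using card_symd[OF f] .
  then show ?thesis by presburger
qed

lemma symd_filter: "{l \<in> symd S T. Q l} = symd {l \<in> S. Q l} {l \<in> T. Q l}"
  unfolding symd_def by auto

lemma vec_smult_self: "v \<in> carrier_vec d \<Longrightarrow> v \<noteq> 0\<^sub>v d \<Longrightarrow> c \<cdot>\<^sub>v v = v \<Longrightarrow> (c::complex) = 1"
proof -
  assume v: "v \<in> carrier_vec d" "v \<noteq> 0\<^sub>v d" "c \<cdot>\<^sub>v v = v"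
  obtain i where i: "i < d" "v $ i \<noteq> 0"
  proof (rule ccontr)
    assume "\<not> thesis"
    then have "\<forall>i<d. v $ i = 0" using that by blast
    then have "v = 0\<^sub>v d" using v(1) by (intro eq_vecI) auto
    then show False using v(2) by simp
  qed
  have "c * v $ i = v $ i" using arg_cong[OF v(3), of "\<lambda>w. w $ i"] i v(1) by simp
  then show ?thesis using i by simp
qed

locale stab =
  fixes n m :: nat and \<Phi> :: "nat \<Rightarrow> complex vec" and P :: "nat \<Rightarrow> (bool \<times> bool) list"
  assumes carrPhi: "\<And>b. b < 2^(n+m) \<Longrightarrow> \<Phi> b \<in> carrier_vec (2^(n+m))"
  and orth: "\<And>b b'. b < 2^(n+m) \<Longrightarrow> b' < 2^(n+m) \<Longrightarrow> \<Phi> b \<bullet>c \<Phi> b' = (if b = b' then 1 else 0)"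
  and lenP: "\<And>j. j < n+m \<Longrightarrow> length (P j) = n+m"
  and commP: "\<And>i j. i < n+m \<Longrightarrow> j < n+m \<Longrightarrow> pauli_mat (P i) * pauli_mat (P j) = pauli_mat (P j) * pauli_mat (P i)"
  and indep: "pauli_independent (n+m) (n+m) P"
  and eig: "\<And>b j. b < 2^(n+m) \<Longrightarrow> j < n+m \<Longrightarrow> \<exists>ev. eigenvector (pauli_mat (P j)) (\<Phi> b) ev"
begin

abbreviation "k \<equiv> n + m"
abbreviation "K \<equiv> (2::nat) ^ (n + m)"

definition G where "G j = pauli_mat (P j)"
definition lam where "lam b j = (SOME ev. eigenvector (G j) (\<Phi> b) ev)"
definition lamS where "lamS b S = (\<Prod>j\<in>S. lam b j)"

primrec gp :: "nat set \<Rightarrow> nat \<Rightarrow> complex mat" where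
  "gp S 0 = 1\<^sub>m K"
| "gp S (Suc j) = (if j \<in> S then G j * gp S j else gp S j)"

definition vv :: "nat set \<Rightarrow> (bool \<times> bool) list" where
  "vv S = map (\<lambda>i. (odd (card {l \<in> S. fst (P l ! i)}), odd (card {l \<in> S. snd (P l ! i)}))) [0..<k]"

lemma G_carrier[simp]: "j < k \<Longrightarrow> G j \<in> carrier_mat K K"
  unfolding G_def using pauli_carrier[of "P j"] lenP[of j] by simp

lemma G_sq: "j < k \<Longrightarrow> G j * G j = 1\<^sub>m K"
  unfolding G_def using pauli_sq[of "P j"] lenP[of j] by simp

lemma G_comm: "i < k \<Longrightarrow> j < k \<Longrightarrow> G i * G j = G j * G i"
  unfolding G_def by (rule commP)

lemma Phi_carrier[simp]: "b < K \<Longrightarrow> \<Phi> b \<in> carrier_vec K"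
  using carrPhi by simp

lemma lam_eig: "b < K \<Longrightarrow> j < k \<Longrightarrow> eigenvector (G j) (\<Phi> b) (lam b j)"
  unfolding lam_def G_def using eig by (metis someI_ex)

lemma Phi_nz: "b < K \<Longrightarrow> \<Phi> b \<noteq> 0\<^sub>v K"
proof
  assume b: "b < K" and z: "\<Phi> b = 0\<^sub>v K"
  have "\<Phi> b \<bullet>c \<Phi> b = 1" using orth[OF b b] by simp
  then show False using z by simp
qed

lemma G_Phi: "b < K \<Longrightarrow> j < k \<Longrightarrow> G j *\<^sub>v \<Phi> b = lam b j \<cdot>\<^sub>v \<Phi> b"
  using lam_eig unfolding eigenvector_def by blast

lemma lam_sq: assumes b: "b < K" and j: "j < k" shows "lam b j * lam b j = 1"
proof -
  have "(G j * G j) *\<^sub>v \<Phi> b = G j *\<^sub>v (G j *\<^sub>v \<Phi> b)"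
    by (rule assoc_mult_mat_vec[of _ K K _ K]) (use b j in auto)
  also have "\<dots> = (lam b j * lam b j) \<cdot>\<^sub>v \<Phi> b"
    using b j by (simp add: G_Phi mult_mat_vec[of _ K K] smult_smult_assoc)
  finally have "(lam b j * lam b j) \<cdot>\<^sub>v \<Phi> b = \<Phi> b" using G_sq[OF j] b by simp
  then show ?thesis using vec_smult_self[OF Phi_carrier[OF b] Phi_nz[OF b]] by blast
qed

lemma lamS_empty[simp]: "lamS b {} = 1" by (simp add: lamS_def)

lemma gp_carrier[simp]: "gp S j \<in> carrier_mat K K" if "j \<le> k"
  using that
proof (induct j)
  case (Suc j)
  then have "j < k" by simp
  then show ?case using Suc by (auto intro: mult_carrier_mat[of _ K K])
qed simp

lemma gp_empty: "gp {} j = 1\<^sub>m K" by (induct j) auto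

lemma gp_vec: "b < K \<Longrightarrow> j \<le> k \<Longrightarrow> gp S j *\<^sub>v \<Phi> b = lamS b (S \<inter> {..<j}) \<cdot>\<^sub>v \<Phi> b"
proof (induct j)
  case 0
  then show ?case by simp
next
  case (Suc j)
  have IH: "gp S j *\<^sub>v \<Phi> b = lamS b (S \<inter> {..<j}) \<cdot>\<^sub>v \<Phi> b" using Suc by simp
  show ?case
  proof (cases "j \<in> S")
    case True
    have e: "S \<inter> {..<Suc j} = insert j (S \<inter> {..<j})" using True by auto
    have jk: "j < k" using Suc by simp
    have "gp S (Suc j) *\<^sub>v \<Phi> b = G j *\<^sub>v (gp S j *\<^sub>v \<Phi> b)"
      using True Suc jk by (simp add: assoc_mult_mat_vec[of _ K K _ K])
    also have "\<dots> = (lam b j * lamS b (S \<inter> {..<j})) \<cdot>\<^sub>v \<Phi> b"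
      unfolding IH using Suc jk by (simp add: mult_mat_vec[of _ K K] G_Phi smult_smult_assoc mult.commute)
    also have "lam b j * lamS b (S \<inter> {..<j}) = lamS b (S \<inter> {..<Suc j})"
      unfolding e lamS_def by simp
    finally show ?thesis .
  next
    case False
    have e: "S \<inter> {..<Suc j} = S \<inter> {..<j}" using False by (auto simp: less_Suc_eq)
    show ?thesis using False IH by (simp add: e)
  qed
qed

lemma G_gp_comm: "i < k \<Longrightarrow> j \<le> k \<Longrightarrow> G i * gp S j = gp S j * G i"
proof (induct j)
  case 0
  then have gc: "G i \<in> carrier_mat K K" by simp
  then show ?case using right_mult_one_mat[OF gc] left_mult_one_mat[OF gc] by simp
next
  case (Suc j)
  then have IH: "G i * gp S j = gp S j * G i" by simp
  show ?case
  proof (cases "j \<in> S")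
    case True
    have "G i * (G j * gp S j) = (G i * G j) * gp S j"
      using Suc by (simp add: assoc_mult_mat[of _ K K _ K _ K])
    also have "\<dots> = (G j * G i) * gp S j" using Suc by (simp add: G_comm)
    also have "\<dots> = G j * (G i * gp S j)" using Suc by (simp add: assoc_mult_mat[of _ K K _ K _ K])
    also have "\<dots> = G j * (gp S j * G i)" by (simp add: IH)
    also have "\<dots> = (G j * gp S j) * G i" using Suc by (simp add: assoc_mult_mat[of _ K K _ K _ K])
    finally show ?thesis using True by simp
  next
    case False
    then show ?thesis using IH by simp
  qed
qed

lemma gp_mult: "j \<le> k \<Longrightarrow> gp S j * gp T j = gp (symd S T) j"
proof (induct j)
  case 0
  then show ?case by simp
next
  case (Suc j)
  then have IH: "gp S j * gp T j = gp (symd S T) j" and j: "j < k" "j \<le> k" by auto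
  have c: "\<And>X. gp X j \<in> carrier_mat K K" using j by simp
  have Gc: "G j \<in> carrier_mat K K" using j by simp
  have cm: "G j * gp X j = gp X j * G j" for X using G_gp_comm[OF j] .
  consider "j \<in> S" "j \<in> T" | "j \<in> S" "j \<notin> T" | "j \<notin> S" "j \<in> T" | "j \<notin> S" "j \<notin> T" by blast
  then show ?case
  proof cases
    case 1
    have "gp S (Suc j) * gp T (Suc j) = G j * gp S j * (G j * gp T j)" using 1 by simp
    also have "\<dots> = G j * (gp S j * (G j * gp T j))" using c Gc by (simp add: assoc_mult_mat[of _ K K _ K _ K])
    also have "gp S j * (G j * gp T j) = (gp S j * G j) * gp T j" using c Gc by (simp add: assoc_mult_mat[of _ K K _ K _ K])
    also have "\<dots> = (G j * gp S j) * gp T j" by (simp add: cm)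
    also have "\<dots> = G j * gp (symd S T) j" using c Gc IH by (simp add: assoc_mult_mat[of _ K K _ K _ K])
    also have "G j * (G j * gp (symd S T) j) = (G j * G j) * gp (symd S T) j"
      using c Gc by (simp add: assoc_mult_mat[of _ K K _ K _ K])
    also have "\<dots> = gp (symd S T) j" using G_sq[OF j(1)] left_mult_one_mat[OF c[of "symd S T"]] by simp
    also have "\<dots> = gp (symd S T) (Suc j)" using 1 by (simp add: symd_def)
    finally show ?thesis .
  next
    case 2
    have "gp S (Suc j) * gp T (Suc j) = G j * gp S j * gp T j" using 2 by simp
    also have "\<dots> = G j * (gp S j * gp T j)" using c Gc by (simp add: assoc_mult_mat[of _ K K _ K _ K])
    also have "\<dots> = gp (symd S T) (Suc j)" using 2 IH by (simp add: symd_def)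
    finally show ?thesis .
  next
    case 3
    have "gp S (Suc j) * gp T (Suc j) = gp S j * (G j * gp T j)" using 3 by simp
    also have "\<dots> = (gp S j * G j) * gp T j" using c Gc by (simp add: assoc_mult_mat[of _ K K _ K _ K])
    also have "\<dots> = (G j * gp S j) * gp T j" by (simp add: cm)
    also have "\<dots> = G j * (gp S j * gp T j)" using c Gc by (simp add: assoc_mult_mat[of _ K K _ K _ K])
    also have "\<dots> = gp (symd S T) (Suc j)" using 3 IH by (simp add: symd_def)
    finally show ?thesis .
  next
    case 4
    then show ?thesis using IH by (simp add: symd_def)
  qed
qed

end


context stab
begin

lemma vv_length[simp]: "length (vv S) = k" by (simp add: vv_def)

lemma vv_nth: "i < k \<Longrightarrow> vv S ! i = (odd (card {l \<in> S. fst (P l ! i)}), odd (card {l \<in> S. snd (P l ! i)}))"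
  by (simp add: vv_def)

lemma vv_empty: "vv {} = replicate k (False, False)"
  by (rule nth_equalityI) (auto simp: vv_nth)

lemma card_filter_insert: "finite A \<Longrightarrow> j \<notin> A \<Longrightarrow>
  card {l \<in> insert j A. Q l} = (if Q j then Suc (card {l \<in> A. Q l}) else card {l \<in> A. Q l})"
proof -
  assume f: "finite A" "j \<notin> A"
  show ?thesis
  proof (cases "Q j")
    case True
    then have "{l \<in> insert j A. Q l} = insert j {l \<in> A. Q l}" by auto
    then show ?thesis using f True by simp
  next
    case False
    then have "{l \<in> insert j A. Q l} = {l \<in> A. Q l}" by auto
    then show ?thesis using False by simp
  qed
qed

lemma vv_insert: "finite A \<Longrightarrow> j \<notin> A \<Longrightarrow> j < k \<Longrightarrow> vv (insert j A) = xl (P j) (vv A)"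
proof (rule nth_equalityI)
  assume f: "finite A" "j \<notin> A" "j < k"
  show "length (vv (insert j A)) = length (xl (P j) (vv A))" using lenP[OF f(3)] by simp
  fix i assume "i < length (vv (insert j A))"
  then have i: "i < k" by simp
  show "vv (insert j A) ! i = xl (P j) (vv A) ! i"
    using i lenP[OF f(3)] f card_filter_insert[OF f(1,2), of "\<lambda>l. fst (P l ! i)"]
      card_filter_insert[OF f(1,2), of "\<lambda>l. snd (P l ! i)"] by (simp add: vv_nth xp_def)
qed

lemma gp_pauli: "j \<le> k \<Longrightarrow> \<exists>\<omega>. \<omega> \<noteq> 0 \<and> gp S j = \<omega> \<cdot>\<^sub>m pauli_mat (vv (S \<inter> {..<j}))"
proof (induct j)
  case 0
  then show ?case by (intro exI[of _ 1]) (simp add: vv_empty pauli_id)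
next
  case (Suc j)
  then obtain \<omega> where w: "\<omega> \<noteq> 0" "gp S j = \<omega> \<cdot>\<^sub>m pauli_mat (vv (S \<inter> {..<j}))" and jk: "j < k" by auto
  show ?case
  proof (cases "j \<in> S")
    case True
    have e: "S \<inter> {..<Suc j} = insert j (S \<inter> {..<j})" using True by auto
    have len: "length (P j) = length (vv (S \<inter> {..<j}))" using lenP[OF jk] by simp
    have "gp S (Suc j) = G j * (\<omega> \<cdot>\<^sub>m pauli_mat (vv (S \<inter> {..<j})))" using True w by simp
    also have "\<dots> = \<omega> \<cdot>\<^sub>m (pauli_mat (P j) * pauli_mat (vv (S \<inter> {..<j})))"
      unfolding G_def by (rule mult_smult_distrib[of _ K K _ K]) (use jk lenP[OF jk] in auto)
    also have "\<dots> = (\<omega> * phl (P j) (vv (S \<inter> {..<j}))) \<cdot>\<^sub>m pauli_mat (vv (S \<inter> {..<Suc j}))"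
      unfolding e using jk by (simp add: pauli_mult[OF len] vv_insert smult_smult_mat)
    finally show ?thesis using w(1) phl_nz by (intro exI[of _ "\<omega> * phl (P j) (vv (S \<inter> {..<j}))"]) simp
  next
    case False
    have e: "S \<inter> {..<Suc j} = S \<inter> {..<j}" using False by (auto simp: less_Suc_eq)
    show ?thesis using False w by (intro exI[of _ \<omega>]) (simp add: e)
  qed
qed

lemma vv_symd: "finite S \<Longrightarrow> finite T \<Longrightarrow> vv (symd S T) = xl (vv S) (vv T)"
  by (rule nth_equalityI) (auto simp: vv_nth xp_def symd_filter odd_card_symd)

lemma vv_zero: assumes S: "S \<subseteq> {..<k}" and z: "set (vv S) \<subseteq> {(False, False)}" shows "S = {}"
proof (rule ccontr)
  assume ne: "S \<noteq> {}"
  from indep[unfolded pauli_independent_def] S ne obtain i where i: "i < k"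
    and o: "odd (card {j \<in> S. fst (P j ! i)}) \<or> odd (card {j \<in> S. snd (P j ! i)})" by blast
  have "vv S ! i \<in> set (vv S)" using i by simp
  then have "vv S ! i = (False, False)" using z by auto
  then show False using o i by (simp add: vv_nth)
qed

lemma vv_inj: assumes S: "S \<subseteq> {..<k}" and T: "T \<subseteq> {..<k}" and e: "vv S = vv T" shows "S = T"
proof -
  have fin: "finite S" "finite T" using S T finite_subset by auto
  have "set (vv (symd S T)) \<subseteq> {(False,False)}" using vv_symd[OF fin] e xl_self by simp
  moreover have "symd S T \<subseteq> {..<k}" using S T by (auto simp: symd_def)
  ultimately have "symd S T = {}" using vv_zero by blast
  then show ?thesis by (auto simp: symd_def)
qed

definition om :: "nat set \<Rightarrow> complex" where
  "om S = (SOME \<omega>. \<omega> \<noteq> 0 \<and> gp S k = \<omega> \<cdot>\<^sub>m pauli_mat (vv S))"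

lemma om_prop: assumes S: "S \<subseteq> {..<k}" shows "om S \<noteq> 0" "gp S k = om S \<cdot>\<^sub>m pauli_mat (vv S)"
proof -
  have e: "S \<inter> {..<k} = S" using S by auto
  have "\<exists>\<omega>. \<omega> \<noteq> 0 \<and> gp S k = \<omega> \<cdot>\<^sub>m pauli_mat (vv S)" using gp_pauli[of k S] e by simp
  then have "om S \<noteq> 0 \<and> gp S k = om S \<cdot>\<^sub>m pauli_mat (vv S)" unfolding om_def by (rule someI_ex)
  then show "om S \<noteq> 0" "gp S k = om S \<cdot>\<^sub>m pauli_mat (vv S)" by auto
qed

lemma symd_self[simp]: "symd S S = {}" by (simp add: symd_def)

lemma om_sq: assumes S: "S \<subseteq> {..<k}" shows "om S * om S = 1"
proof -
  have "1\<^sub>m K = gp S k * gp S k" using gp_mult[of k S S] by (simp add: gp_empty)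
  also have "\<dots> = (om S * om S) \<cdot>\<^sub>m (pauli_mat (vv S) * pauli_mat (vv S))"
    unfolding om_prop(2)[OF S] using pauli_carrier[of "vv S"]
    by (simp add: mult_smult_distrib[of _ K K _ K] mult_smult_assoc_mat[of _ K K _ K] smult_smult_mat)
  also have "\<dots> = (om S * om S) \<cdot>\<^sub>m 1\<^sub>m K" using pauli_sq[of "vv S"] by simp
  finally have "(1\<^sub>m K :: complex mat) $$ (0,0) = ((om S * om S) \<cdot>\<^sub>m 1\<^sub>m K) $$ (0,0)" by simp
  then show ?thesis by simp
qed

lemma tr_gp: assumes S: "S \<subseteq> {..<k}" shows "tr (gp S k) = (if S = {} then of_nat K else 0)"
proof (cases "S = {}")
  case True
  then show ?thesis by (simp add: gp_empty tr_one)
next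
  case False
  have "\<not> set (vv S) \<subseteq> {(False,False)}" using vv_zero[OF S] False by blast
  then have "tr (pauli_mat (vv S)) = 0" by (simp add: tr_pauli)
  then show ?thesis unfolding om_prop(2)[OF S] using False by (simp add: tr_smult[OF pauli_carrier])
qed

lemma lamS_sq: "b < K \<Longrightarrow> S \<subseteq> {..<k} \<Longrightarrow> lamS b S * lamS b S = 1"
  unfolding lamS_def by (simp add: prod.distrib[symmetric] lam_sq subset_iff)

lemma lamS_symd: assumes b: "b < K" and S: "S \<subseteq> {..<k}" and T: "T \<subseteq> {..<k}"
  shows "lamS b (symd S T) = lamS b S * lamS b T"
proof -
  have fin: "finite S" "finite T" using S T finite_subset by auto
  have sq: "lamS b (S \<inter> T) * lamS b (S \<inter> T) = 1" by (rule lamS_sq[OF b]) (use S in auto)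
  have "lamS b S = lamS b (S - T) * lamS b (S \<inter> T)" unfolding lamS_def
    using fin by (subst prod.union_disjoint[symmetric]) (auto intro: prod.cong)
  moreover have "lamS b T = lamS b (T - S) * lamS b (S \<inter> T)" unfolding lamS_def
    using fin by (subst prod.union_disjoint[symmetric]) (auto intro: prod.cong)
  moreover have "lamS b (symd S T) = lamS b (S - T) * lamS b (T - S)" unfolding lamS_def symd_def
    using fin by (subst prod.union_disjoint) auto
  ultimately show ?thesis using sq by (simp add: algebra_simps)
qed

end


context stab
begin

lemma Phi_dim[simp]: assumes "b < K" shows "dim_vec (\<Phi> b) = K"
  using carrier_vecD[OF Phi_carrier[OF assms]] .

lemma gp_dims[simp]: assumes "j \<le> k" shows "dim_row (gp S j) = K" "dim_col (gp S j) = K"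
  using carrier_matD[OF gp_carrier[OF assms]] by auto

lemma inner_Phi: "b < K \<Longrightarrow> b' < K \<Longrightarrow> (\<Sum>i<K. \<Phi> b' $ i * cnj (\<Phi> b $ i)) = (if b = b' then 1 else 0)"
proof -
  assume b: "b < K" "b' < K"
  have "\<Phi> b' \<bullet>c \<Phi> b = (\<Sum>i<K. \<Phi> b' $ i * cnj (\<Phi> b $ i))"
    using b by (simp add: scalar_prod_def atLeast0LessThan)
  then show ?thesis using orth[OF b(2,1)] by auto
qed

lemma compl: assumes i: "i < K" and j: "j < K"
  shows "(\<Sum>b<K. \<Phi> b $ i * cnj (\<Phi> b $ j)) = (if i = j then 1 else 0)"
proof -
  define U where "U = mat K K (\<lambda>(i,b). \<Phi> b $ i)"
  define UH where "UH = mat K K (\<lambda>(b,i). cnj (\<Phi> b $ i))"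
  have U: "U \<in> carrier_mat K K" and UH: "UH \<in> carrier_mat K K" unfolding U_def UH_def by auto
  have "UH * U = 1\<^sub>m K"
  proof (rule eq_matI)
    fix b b' assume "b < dim_row (1\<^sub>m K)" "b' < dim_col (1\<^sub>m K)"
    then have bb: "b < K" "b' < K" by auto
    have "(UH * U) $$ (b,b') = (\<Sum>i<K. \<Phi> b' $ i * cnj (\<Phi> b $ i))"
      using bb unfolding U_def UH_def by (simp add: scalar_prod_def atLeast0LessThan mult.commute)
    then show "(UH * U) $$ (b,b') = 1\<^sub>m K $$ (b,b')" using inner_Phi[OF bb] bb by simp
  qed (insert U UH, auto)
  then have "U * UH = 1\<^sub>m K" using mat_mult_left_right_inverse[OF UH U] by simp
  then have "(U * UH) $$ (i,j) = (if i = j then 1 else 0)" using i j by simp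
  moreover have "(U * UH) $$ (i,j) = (\<Sum>b<K. \<Phi> b $ i * cnj (\<Phi> b $ j))"
    using i j unfolding U_def UH_def by (simp add: scalar_prod_def atLeast0LessThan)
  ultimately show ?thesis by simp
qed

lemma norm_Phi: "b < K \<Longrightarrow> (\<Sum>i<K. \<Phi> b $ i * cnj (\<Phi> b $ i)) = 1"
  using inner_Phi[of b b] by simp

lemma expand: assumes X: "X \<in> carrier_mat K K" and i: "i < K" and j: "j < K"
  shows "X $$ (i,j) = (\<Sum>b<K. (X *\<^sub>v \<Phi> b) $ i * cnj (\<Phi> b $ j))"
proof -
  have "(\<Sum>b<K. (X *\<^sub>v \<Phi> b) $ i * cnj (\<Phi> b $ j)) = (\<Sum>b<K. (\<Sum>l<K. X $$ (i,l) * \<Phi> b $ l) * cnj (\<Phi> b $ j))"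
    using X i by (intro sum.cong refl) (simp add: scalar_prod_def atLeast0LessThan)
  also have "\<dots> = (\<Sum>b<K. \<Sum>l<K. X $$ (i,l) * (\<Phi> b $ l * cnj (\<Phi> b $ j)))"
    by (simp add: sum_distrib_right mult.assoc)
  also have "\<dots> = (\<Sum>l<K. \<Sum>b<K. X $$ (i,l) * (\<Phi> b $ l * cnj (\<Phi> b $ j)))"
    by (rule sum.swap)
  also have "\<dots> = (\<Sum>l<K. X $$ (i,l) * (\<Sum>b<K. \<Phi> b $ l * cnj (\<Phi> b $ j)))"
    by (simp add: sum_distrib_left)
  also have "\<dots> = (\<Sum>l<K. X $$ (i,l) * (if l = j then 1 else 0))"
    using j by (intro sum.cong refl) (simp add: compl)
  also have "\<dots> = X $$ (i,j)" using j by (simp add: if_distrib cong: if_cong)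
  finally show ?thesis by simp
qed

definition kb :: "nat \<Rightarrow> complex mat" where "kb b = ket (\<Phi> b) * bra (\<Phi> b)"

lemma kb_carrier[simp]: "b < K \<Longrightarrow> kb b \<in> carrier_mat K K"
  unfolding kb_def ket_def bra_def by auto

lemma kb_dims[simp]: "b < K \<Longrightarrow> dim_row (kb b) = K" "b < K \<Longrightarrow> dim_col (kb b) = K"
  unfolding kb_def ket_def bra_def by auto

lemma kb_index: "b < K \<Longrightarrow> i < K \<Longrightarrow> j < K \<Longrightarrow> kb b $$ (i,j) = \<Phi> b $ i * cnj (\<Phi> b $ j)"
  unfolding kb_def ket_def bra_def by (simp add: scalar_prod_def)

lemma gp_spectral: assumes S: "S \<subseteq> {..<k}"
  shows "gp S k = msum K K (\<lambda>b. lamS b S \<cdot>\<^sub>m kb b) {..<K}"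
proof (rule eq_matI)
  fix i j assume "i < dim_row (msum K K (\<lambda>b. lamS b S \<cdot>\<^sub>m kb b) {..<K})" "j < dim_col (msum K K (\<lambda>b. lamS b S \<cdot>\<^sub>m kb b) {..<K})"
  then have ij: "i < K" "j < K" by auto
  have e: "S \<inter> {..<k} = S" using S by auto
  have "gp S k $$ (i,j) = (\<Sum>b<K. (gp S k *\<^sub>v \<Phi> b) $ i * cnj (\<Phi> b $ j))"
    using ij by (intro expand) auto
  also have "\<dots> = (\<Sum>b<K. (lamS b S \<cdot>\<^sub>m kb b) $$ (i,j))"
    using ij by (intro sum.cong refl) (simp add: gp_vec e kb_index)
  finally show "gp S k $$ (i,j) = msum K K (\<lambda>b. lamS b S \<cdot>\<^sub>m kb b) {..<K} $$ (i,j)" using ij by simp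
qed auto

lemma lam_pm: "b < K \<Longrightarrow> j < k \<Longrightarrow> lam b j = 1 \<or> lam b j = -1"
  using lam_sq by (metis power2_eq_1_iff power2_eq_square)

definition cn :: "nat \<Rightarrow> nat \<Rightarrow> nat" where
  "cn b b' = (if (\<forall>j<k. lam b j = lam b' j) then K else 0)"

lemma cc: assumes b: "b < K" "b' < K"
  shows "(\<Sum>S\<in>Pow {..<k}. lamS b S * lamS b' S) = of_nat (cn b b')"
proof -
  have "(\<Sum>S\<in>Pow {..<k}. lamS b S * lamS b' S) = (\<Sum>S\<in>Pow {..<k}. (\<Prod>j\<in>S. lam b j * lam b' j) * (\<Prod>j\<in>{..<k} - S. 1))"
    unfolding lamS_def by (simp add: prod.distrib)
  also have "\<dots> = (\<Prod>j<k. lam b j * lam b' j + 1)" by (rule prod_add[symmetric]) simp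
  also have "\<dots> = (\<Prod>j<k. if lam b j = lam b' j then 2 else 0)"
  proof (intro prod.cong refl)
    fix j assume "j \<in> {..<k}"
    then have j: "j < k" by simp
    show "lam b j * lam b' j + 1 = (if lam b j = lam b' j then 2 else 0)"
      using lam_pm[OF b(1) j] lam_pm[OF b(2) j] by auto
  qed
  also have "\<dots> = of_nat (cn b b')"
  proof (cases "\<forall>j<k. lam b j = lam b' j")
    case True
    then show ?thesis unfolding cn_def by simp
  next
    case False
    then obtain j where j: "j < k" "lam b j \<noteq> lam b' j" by blast
    have "(\<Prod>j<k. if lam b j = lam b' j then 2 else 0) = (0::complex)"
      by (rule prod_zero) (use j in auto)
    then show ?thesis unfolding cn_def using False by simp
  qed
  finally show ?thesis .
qed

lemma cn_self: "b < K \<Longrightarrow> cn b b = K" by (simp add: cn_def)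

lemma Pow_sub: "S \<in> Pow {..<k} \<Longrightarrow> S \<subseteq> {..<k}" by simp

lemma cn_delta: assumes b: "b < K" "b' < K" shows "cn b b' = (if b' = b then K else 0)"
proof -
  define Q where "Q = msum K K (\<lambda>S. lamS b S \<cdot>\<^sub>m gp S k) (Pow {..<k})"
  have Qi: "Q $$ (i,j) = (\<Sum>b'<K. of_nat (cn b b') * (\<Phi> b' $ i * cnj (\<Phi> b' $ j)))" if ij: "i < K" "j < K" for i j
  proof -
    have "Q $$ (i,j) = (\<Sum>S\<in>Pow {..<k}. lamS b S * gp S k $$ (i,j))"
      unfolding Q_def using ij by (simp add: Pow_sub)
    also have "\<dots> = (\<Sum>S\<in>Pow {..<k}. lamS b S * (\<Sum>b'<K. lamS b' S * (\<Phi> b' $ i * cnj (\<Phi> b' $ j))))"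
    proof (intro sum.cong refl)
      fix S assume S: "S \<in> Pow {..<k}"
      have "gp S k $$ (i,j) = (\<Sum>b'<K. (lamS b' S \<cdot>\<^sub>m kb b') $$ (i,j))"
        using gp_spectral[OF Pow_sub[OF S]] ij by simp
      also have "\<dots> = (\<Sum>b'<K. lamS b' S * (\<Phi> b' $ i * cnj (\<Phi> b' $ j)))"
        using ij by (intro sum.cong refl) (simp add: kb_index)
      finally show "lamS b S * gp S k $$ (i,j) = lamS b S * (\<Sum>b'<K. lamS b' S * (\<Phi> b' $ i * cnj (\<Phi> b' $ j)))" by simp
    qed
    also have "\<dots> = (\<Sum>b'<K. (\<Sum>S\<in>Pow {..<k}. lamS b S * lamS b' S) * (\<Phi> b' $ i * cnj (\<Phi> b' $ j)))"
      by (simp add: sum_distrib_left sum_distrib_right sum.swap[of _ "Pow {..<k}"] mult.assoc)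
    also have "\<dots> = (\<Sum>b'<K. of_nat (cn b b') * (\<Phi> b' $ i * cnj (\<Phi> b' $ j)))"
      using b by (intro sum.cong refl) (simp add: cc)
    finally show ?thesis .
  qed
  have "tr Q = (\<Sum>S\<in>Pow {..<k}. tr (lamS b S \<cdot>\<^sub>m gp S k))"
    unfolding Q_def by (rule tr_msum) (auto simp: Pow_sub)
  also have "\<dots> = (\<Sum>S\<in>Pow {..<k}. if S = {} then of_nat K else 0)"
    by (intro sum.cong refl) (simp add: tr_smult[OF gp_carrier] tr_gp)
  also have "\<dots> = of_nat K" by simp
  finally have t1: "tr Q = of_nat K" .
  have "tr Q = (\<Sum>i<K. Q $$ (i,i))" unfolding tr_def Q_def by simp
  also have "\<dots> = (\<Sum>i<K. \<Sum>b'<K. of_nat (cn b b') * (\<Phi> b' $ i * cnj (\<Phi> b' $ i)))"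
    by (intro sum.cong refl) (simp add: Qi)
  finally have "tr Q = (\<Sum>i<K. \<Sum>b'<K. of_nat (cn b b') * (\<Phi> b' $ i * cnj (\<Phi> b' $ i)))" .
  also have "\<dots> = (\<Sum>b'<K. \<Sum>i<K. of_nat (cn b b') * (\<Phi> b' $ i * cnj (\<Phi> b' $ i)))"
    by (rule sum.swap)
  also have "\<dots> = (\<Sum>b'<K. of_nat (cn b b') * (\<Sum>i<K. \<Phi> b' $ i * cnj (\<Phi> b' $ i)))"
    by (simp add: sum_distrib_left)
  also have "\<dots> = (\<Sum>b'<K. of_nat (cn b b'))" by (intro sum.cong refl) (simp add: norm_Phi)
  finally have "of_nat (\<Sum>b'<K. cn b b') = (of_nat K :: complex)" using t1 by simp
  then have s: "(\<Sum>b'<K. cn b b') = K" using of_nat_eq_iff by blast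
  have "(\<Sum>b'<K. cn b b') = cn b b + (\<Sum>b'\<in>{..<K} - {b}. cn b b')"
    using b by (subst sum.remove[of _ b]) auto
  then have "(\<Sum>b'\<in>{..<K} - {b}. cn b b') = 0" using s cn_self[OF b(1)] by simp
  then have "\<forall>b'\<in>{..<K} - {b}. cn b b' = 0" by simp
  then show ?thesis using b cn_self[OF b(1)] by auto
qed

lemma kb_expand: assumes b: "b < K"
  shows "kb b = msum K K (\<lambda>S. (lamS b S / of_nat K) \<cdot>\<^sub>m gp S k) (Pow {..<k})"
proof (rule eq_matI)
  fix i j assume "i < dim_row (msum K K (\<lambda>S. (lamS b S / of_nat K) \<cdot>\<^sub>m gp S k) (Pow {..<k}))"
    "j < dim_col (msum K K (\<lambda>S. (lamS b S / of_nat K) \<cdot>\<^sub>m gp S k) (Pow {..<k}))"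
  then have ij: "i < K" "j < K" by auto
  have "msum K K (\<lambda>S. (lamS b S / of_nat K) \<cdot>\<^sub>m gp S k) (Pow {..<k}) $$ (i,j)
      = (\<Sum>S\<in>Pow {..<k}. lamS b S * gp S k $$ (i,j)) / of_nat K"
    using ij by (simp add: Pow_sub sum_divide_distrib)
  also have "(\<Sum>S\<in>Pow {..<k}. lamS b S * gp S k $$ (i,j)) = (\<Sum>b'<K. of_nat (cn b b') * (\<Phi> b' $ i * cnj (\<Phi> b' $ j)))"
  proof -
    have "(\<Sum>S\<in>Pow {..<k}. lamS b S * gp S k $$ (i,j)) = (\<Sum>S\<in>Pow {..<k}. lamS b S * (\<Sum>b'<K. lamS b' S * (\<Phi> b' $ i * cnj (\<Phi> b' $ j))))"
    proof (intro sum.cong refl)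
      fix S assume S: "S \<in> Pow {..<k}"
      have "gp S k $$ (i,j) = (\<Sum>b'<K. (lamS b' S \<cdot>\<^sub>m kb b') $$ (i,j))"
        using gp_spectral[OF Pow_sub[OF S]] ij by simp
      also have "\<dots> = (\<Sum>b'<K. lamS b' S * (\<Phi> b' $ i * cnj (\<Phi> b' $ j)))"
        using ij by (intro sum.cong refl) (simp add: kb_index)
      finally show "lamS b S * gp S k $$ (i,j) = lamS b S * (\<Sum>b'<K. lamS b' S * (\<Phi> b' $ i * cnj (\<Phi> b' $ j)))" by simp
    qed
    also have "\<dots> = (\<Sum>b'<K. (\<Sum>S\<in>Pow {..<k}. lamS b S * lamS b' S) * (\<Phi> b' $ i * cnj (\<Phi> b' $ j)))"
      by (simp add: sum_distrib_left sum_distrib_right sum.swap[of _ "Pow {..<k}"] mult.assoc)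
    also have "\<dots> = (\<Sum>b'<K. of_nat (cn b b') * (\<Phi> b' $ i * cnj (\<Phi> b' $ j)))"
      using b by (intro sum.cong refl) (simp add: cc)
    finally show ?thesis .
  qed
  also have "\<dots> = (\<Sum>b'<K. if b' = b then of_nat K * (\<Phi> b $ i * cnj (\<Phi> b $ j)) else 0)"
    using b by (intro sum.cong refl) (simp add: cn_delta)
  also have "\<dots> = of_nat K * (\<Phi> b $ i * cnj (\<Phi> b $ j))"
    using b by simp
  finally show "kb b $$ (i,j) = msum K K (\<lambda>S. (lamS b S / of_nat K) \<cdot>\<^sub>m gp S k) (Pow {..<k}) $$ (i,j)"
    using ij b by (simp add: kb_index)
qed (use b in auto)

end


lemma kron_index2: assumes A: "A \<in> carrier_mat a a" and B: "B \<in> carrier_mat b b"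
  and i: "i < a" "i' < a" and j: "j < b" "j' < b"
  shows "kron A B $$ (i*b+j, i'*b+j') = A $$ (i,i') * B $$ (j,j')"
proof -
  have l: "i*b+j < a*b" "i'*b+j' < a*b"
  proof -
    have "i*b+j < Suc i * b" using j by simp
    also have "\<dots> \<le> a*b" using i by (intro mult_le_mono1) simp
    finally show "i*b+j < a*b" .
    have "i'*b+j' < Suc i' * b" using j by simp
    also have "\<dots> \<le> a*b" using i by (intro mult_le_mono1) simp
    finally show "i'*b+j' < a*b" .
  qed
  show ?thesis using A B l j by (simp add: div_mod_lt)
qed

lemma idx_lt: "i < (a::nat) \<Longrightarrow> j < b \<Longrightarrow> i*b+j < a*b"
proof -
  assume "i < a" "j < b"
  then have "i*b+j < Suc i * b" by simp
  also have "\<dots> \<le> a*b" using \<open>i < a\<close> by (intro mult_le_mono1) simp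
  finally show ?thesis .
qed

lemma purity_sym:
  fixes f :: "nat \<Rightarrow> nat \<Rightarrow> complex"
  shows "(\<Sum>i<a. \<Sum>i'<a. (\<Sum>j<c. f i j * g i' j) * (\<Sum>j'<c. f i' j' * g i j'))
       = (\<Sum>j<c. \<Sum>j'<c. (\<Sum>i<a. f i j * g i j') * (\<Sum>i'<a. f i' j' * g i' j))"
proof -
  define T where "T i i' j j' = f i j * g i' j * (f i' j' * g i j')" for i i' j j'
  have "(\<Sum>i<a. \<Sum>i'<a. (\<Sum>j<c. f i j * g i' j) * (\<Sum>j'<c. f i' j' * g i j'))
      = (\<Sum>i<a. \<Sum>i'<a. \<Sum>j<c. \<Sum>j'<c. T i i' j j')"
    unfolding T_def by (simp add: sum_product)
  also have "\<dots> = (\<Sum>i<a. \<Sum>j<c. \<Sum>i'<a. \<Sum>j'<c. T i i' j j')"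
    by (rule sum.cong[OF refl]) (rule sum.swap)
  also have "\<dots> = (\<Sum>j<c. \<Sum>i<a. \<Sum>i'<a. \<Sum>j'<c. T i i' j j')"
    by (rule sum.swap)
  also have "\<dots> = (\<Sum>j<c. \<Sum>i<a. \<Sum>j'<c. \<Sum>i'<a. T i i' j j')"
    by (rule sum.cong[OF refl], rule sum.cong[OF refl], rule sum.swap)
  also have "\<dots> = (\<Sum>j<c. \<Sum>j'<c. \<Sum>i<a. \<Sum>i'<a. T i i' j j')"
    by (rule sum.cong[OF refl], rule sum.swap)
  also have "\<dots> = (\<Sum>j<c. \<Sum>j'<c. (\<Sum>i<a. f i j * g i j') * (\<Sum>i'<a. f i' j' * g i' j))"
    unfolding T_def by (simp add: sum_product mult_ac)
  finally show ?thesis .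
qed

lemma pur_pauli:
  fixes av :: "'s \<Rightarrow> (bool \<times> bool) list"
  assumes T: "finite T" and len: "\<And>S. S \<in> T \<Longrightarrow> length (av S) = L"
  and inj: "inj_on av T" and eps: "\<And>S. S \<in> T \<Longrightarrow> e S * e S = 1"
  shows "tr (msum (2^L) (2^L) (\<lambda>S. (e S * c) \<cdot>\<^sub>m pauli_mat (av S)) T * msum (2^L) (2^L) (\<lambda>S. (e S * c) \<cdot>\<^sub>m pauli_mat (av S)) T)
    = c * c * of_nat (card T) * 2^L"
proof -
  let ?D = "(2::nat)^L"
  let ?X = "msum ?D ?D (\<lambda>S. (e S * c) \<cdot>\<^sub>m pauli_mat (av S)) T"
  have pc: "\<And>S. S \<in> T \<Longrightarrow> pauli_mat (av S) \<in> carrier_mat ?D ?D" using len pauli_carrier by metis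
  have "?X * ?X = msum ?D ?D (\<lambda>S. ((e S * c) \<cdot>\<^sub>m pauli_mat (av S)) * ?X) T"
    using pc by (intro mult_msum_right) auto
  then have "tr (?X * ?X) = (\<Sum>S\<in>T. tr (((e S * c) \<cdot>\<^sub>m pauli_mat (av S)) * ?X))"
    using pc by (simp add: tr_msum mult_carrier_mat[of _ ?D ?D _ ?D])
  also have "\<dots> = (\<Sum>S\<in>T. \<Sum>S'\<in>T. (e S * c) * (e S' * c) * tr (pauli_mat (av S) * pauli_mat (av S')))"
  proof (intro sum.cong refl)
    fix S assume S: "S \<in> T"
    have "((e S * c) \<cdot>\<^sub>m pauli_mat (av S)) * ?X = msum ?D ?D (\<lambda>S'. ((e S * c) \<cdot>\<^sub>m pauli_mat (av S)) * ((e S' * c) \<cdot>\<^sub>m pauli_mat (av S'))) T"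
      using pc S by (intro mult_msum_left) auto
    also have "\<dots> = msum ?D ?D (\<lambda>S'. ((e S * c) * (e S' * c)) \<cdot>\<^sub>m (pauli_mat (av S) * pauli_mat (av S'))) T"
      using pc S by (intro msum_cong) (simp add: mult_smult_distrib[of _ ?D ?D _ ?D] mult_smult_assoc_mat[of _ ?D ?D _ ?D] smult_smult_mat mult.commute)
    finally show "tr (((e S * c) \<cdot>\<^sub>m pauli_mat (av S)) * ?X) = (\<Sum>S'\<in>T. (e S * c) * (e S' * c) * tr (pauli_mat (av S) * pauli_mat (av S')))"
      using pc S by (simp add: tr_msum tr_smult[of _ ?D] mult_carrier_mat[of _ ?D ?D _ ?D])
  qed
  also have "\<dots> = (\<Sum>S\<in>T. \<Sum>S'\<in>T. if S' = S then c * c * 2^L else 0)"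
  proof (intro sum.cong refl)
    fix S S' assume S: "S \<in> T" and S': "S' \<in> T"
    have "tr (pauli_mat (av S) * pauli_mat (av S')) = (if av S = av S' then 2^L else 0)"
      using tr_pauli_mult[of "av S" "av S'"] len[OF S] len[OF S'] by simp
    moreover have "av S = av S' \<longleftrightarrow> S' = S" using inj S S' by (auto dest: inj_onD)
    ultimately show "(e S * c) * (e S' * c) * tr (pauli_mat (av S) * pauli_mat (av S')) = (if S' = S then c * c * 2^L else 0)"
      using eps[OF S] by (auto simp: algebra_simps)
  qed
  also have "\<dots> = of_nat (card T) * (c * c * 2^L)" using T by simp
  finally show ?thesis by (simp add: algebra_simps)
qed

context stab
begin

abbreviation "N \<equiv> (2::nat) ^ n"
abbreviation "M \<equiv> (2::nat) ^ m"

lemma KNM: "K = N * M" by (simp add: power_add)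

definition av where "av S = take n (vv S)"
definition bv where "bv S = drop n (vv S)"
definition pa where "pa S = pauli_mat (av S)"
definition pb where "pb S = pauli_mat (bv S)"
definition eps where "eps b S = lamS b S * om S"

lemma av_len[simp]: "length (av S) = n" by (simp add: av_def)
lemma bv_len[simp]: "length (bv S) = m" by (simp add: bv_def)
lemma pa_carrier[simp]: "pa S \<in> carrier_mat N N" unfolding pa_def using pauli_carrier[of "av S"] by simp
lemma pb_carrier[simp]: "pb S \<in> carrier_mat M M" unfolding pb_def using pauli_carrier[of "bv S"] by simp
lemma pa_dims[simp]: "dim_row (pa S) = N" "dim_col (pa S) = N" unfolding pa_def by simp_all
lemma pb_dims[simp]: "dim_row (pb S) = M" "dim_col (pb S) = M" unfolding pb_def by simp_all

lemma gp_split: "S \<subseteq> {..<k} \<Longrightarrow> gp S k = om S \<cdot>\<^sub>m kron (pa S) (pb S)"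
  unfolding pa_def pb_def av_def bv_def using om_prop(2) pauli_append[of "take n (vv S)" "drop n (vv S)"] by simp

lemma kb_expand2: "b < K \<Longrightarrow> kb b = msum K K (\<lambda>S. (eps b S / of_nat K) \<cdot>\<^sub>m kron (pa S) (pb S)) (Pow {..<k})"
  unfolding kb_expand by (intro msum_cong) (simp add: gp_split eps_def smult_smult_mat)

definition TA where "TA = {S \<in> Pow {..<k}. set (bv S) \<subseteq> {(False,False)}}"
definition TB where "TB = {S \<in> Pow {..<k}. set (av S) \<subseteq> {(False,False)}}"

lemma TA_fin: "finite TA" and TB_fin: "finite TB" unfolding TA_def TB_def by auto

lemma tr_pb: "tr (pb S) = (if set (bv S) \<subseteq> {(False,False)} then of_nat M else 0)"
  unfolding pb_def by (simp add: tr_pauli)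
lemma tr_pa: "tr (pa S) = (if set (av S) \<subseteq> {(False,False)} then of_nat N else 0)"
  unfolding pa_def by (simp add: tr_pauli)

end


context stab
begin

lemma Npos: "N > 0" and Mpos: "M > 0" by auto

lemma kb_kron_index: assumes b: "b < K" and i: "i < N" "i' < N" and j: "j < M" "j' < M"
  shows "kb b $$ (i*M+j, i'*M+j') = (\<Sum>S\<in>Pow {..<k}. (eps b S / of_nat K) * (pa S $$ (i,i') * pb S $$ (j,j')))"
proof -
  have l: "i*M+j < K" "i'*M+j' < K" using idx_lt[OF i(1) j(1)] idx_lt[OF i(2) j(2)] KNM by auto
  have "kb b $$ (i*M+j, i'*M+j') = (\<Sum>S\<in>Pow {..<k}. ((eps b S / of_nat K) \<cdot>\<^sub>m kron (pa S) (pb S)) $$ (i*M+j, i'*M+j'))"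
    using l by (simp add: kb_expand2[OF b])
  also have "\<dots> = (\<Sum>S\<in>Pow {..<k}. (eps b S / of_nat K) * (pa S $$ (i,i') * pb S $$ (j,j')))"
    using l i j by (intro sum.cong refl) (simp add: KNM kron_index2[OF pa_carrier pb_carrier])
  finally show ?thesis .
qed

lemma rhoA: assumes b: "b < K"
  shows "reduced_state n m (\<Phi> b) = msum N N (\<lambda>S. (eps b S * (1 / of_nat N)) \<cdot>\<^sub>m pauli_mat (av S)) TA"
proof (rule eq_matI)
  fix i i' assume "i < dim_row (msum N N (\<lambda>S. (eps b S * (1 / of_nat N)) \<cdot>\<^sub>m pauli_mat (av S)) TA)"
    "i' < dim_col (msum N N (\<lambda>S. (eps b S * (1 / of_nat N)) \<cdot>\<^sub>m pauli_mat (av S)) TA)"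
  then have ii: "i < N" "i' < N" by auto
  have "reduced_state n m (\<Phi> b) $$ (i,i') = (\<Sum>j<M. kb b $$ (i*M+j, i'*M+j))"
    using ii idx_lt[OF ii(1)] idx_lt[OF ii(2)] KNM b unfolding reduced_state_def
    by (auto intro!: sum.cong simp: kb_index)
  also have "\<dots> = (\<Sum>j<M. \<Sum>S\<in>Pow {..<k}. (eps b S / of_nat K) * (pa S $$ (i,i') * pb S $$ (j,j)))"
    using ii by (intro sum.cong refl) (simp add: kb_kron_index[OF b])
  also have "\<dots> = (\<Sum>S\<in>Pow {..<k}. (eps b S / of_nat K) * pa S $$ (i,i') * tr (pb S))"
    unfolding tr_def by (subst sum.swap) (simp add: sum_distrib_left mult.assoc)
  also have "\<dots> = (\<Sum>S\<in>Pow {..<k}. if S \<in> TA then (eps b S * (1 / of_nat N)) * pa S $$ (i,i') else 0)"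
  proof (intro sum.cong refl)
    fix S assume S: "S \<in> Pow {..<k}"
    show "(eps b S / of_nat K) * pa S $$ (i,i') * tr (pb S) = (if S \<in> TA then (eps b S * (1 / of_nat N)) * pa S $$ (i,i') else 0)"
      using S unfolding tr_pb TA_def KNM by (simp add: field_simps)
  qed
  also have "\<dots> = (\<Sum>S\<in>TA. (eps b S * (1 / of_nat N)) * pa S $$ (i,i'))"
    unfolding TA_def by (simp add: sum.inter_filter[symmetric])
  also have "\<dots> = msum N N (\<lambda>S. (eps b S * (1 / of_nat N)) \<cdot>\<^sub>m pauli_mat (av S)) TA $$ (i,i')"
    using ii by (simp add: pa_def)
  finally show "reduced_state n m (\<Phi> b) $$ (i,i') = msum N N (\<lambda>S. (eps b S * (1 / of_nat N)) \<cdot>\<^sub>m pauli_mat (av S)) TA $$ (i,i')" .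
qed (auto simp: reduced_state_def)

definition rhoB :: "complex vec \<Rightarrow> complex mat" where
  "rhoB v = mat M M (\<lambda>(j,j'). \<Sum>i<N. v $ (i*M+j) * cnj (v $ (i*M+j')))"

lemma rhoB: assumes b: "b < K"
  shows "rhoB (\<Phi> b) = msum M M (\<lambda>S. (eps b S * (1 / of_nat M)) \<cdot>\<^sub>m pauli_mat (bv S)) TB"
proof (rule eq_matI)
  fix j j' assume "j < dim_row (msum M M (\<lambda>S. (eps b S * (1 / of_nat M)) \<cdot>\<^sub>m pauli_mat (bv S)) TB)"
    "j' < dim_col (msum M M (\<lambda>S. (eps b S * (1 / of_nat M)) \<cdot>\<^sub>m pauli_mat (bv S)) TB)"
  then have jj: "j < M" "j' < M" by auto
  have "rhoB (\<Phi> b) $$ (j,j') = (\<Sum>i<N. kb b $$ (i*M+j, i*M+j'))"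
    using jj b KNM unfolding rhoB_def
    by (auto intro!: sum.cong simp: kb_index idx_lt)
  also have "\<dots> = (\<Sum>i<N. \<Sum>S\<in>Pow {..<k}. (eps b S / of_nat K) * (pa S $$ (i,i) * pb S $$ (j,j')))"
    using jj by (intro sum.cong refl) (simp add: kb_kron_index[OF b])
  also have "\<dots> = (\<Sum>S\<in>Pow {..<k}. (eps b S / of_nat K) * pb S $$ (j,j') * tr (pa S))"
    unfolding tr_def by (subst sum.swap) (simp add: sum_distrib_left sum_distrib_right sum_divide_distrib mult_ac)
  also have "\<dots> = (\<Sum>S\<in>Pow {..<k}. if S \<in> TB then (eps b S * (1 / of_nat M)) * pb S $$ (j,j') else 0)"
  proof (intro sum.cong refl)
    fix S assume S: "S \<in> Pow {..<k}"
    show "(eps b S / of_nat K) * pb S $$ (j,j') * tr (pa S) = (if S \<in> TB then (eps b S * (1 / of_nat M)) * pb S $$ (j,j') else 0)"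
      using S unfolding tr_pa TB_def KNM by (simp add: field_simps)
  qed
  also have "\<dots> = (\<Sum>S\<in>TB. (eps b S * (1 / of_nat M)) * pb S $$ (j,j'))"
    unfolding TB_def by (simp add: sum.inter_filter[symmetric])
  also have "\<dots> = msum M M (\<lambda>S. (eps b S * (1 / of_nat M)) \<cdot>\<^sub>m pauli_mat (bv S)) TB $$ (j,j')"
    using jj by (simp add: pb_def)
  finally show "rhoB (\<Phi> b) $$ (j,j') = msum M M (\<lambda>S. (eps b S * (1 / of_nat M)) \<cdot>\<^sub>m pauli_mat (bv S)) TB $$ (j,j')" .
qed (auto simp: rhoB_def)

end


lemma zero_list: "length l = L \<Longrightarrow> set l \<subseteq> {(False,False)} \<Longrightarrow> l = replicate L (False,False)"
proof -
  assume "length l = L" "set l \<subseteq> {(False,False)}"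
  then have "\<forall>y\<in>set l. y = (False,False)" "length l = L" by auto
  then show ?thesis using replicate_length_same[of l "(False,False)"] by simp
qed

lemma drop_xl: "drop n (xl a b) = xl (drop n a) (drop n b)"
  by (simp add: xl_def drop_map drop_zip)

lemma take_xl: "take n (xl a b) = xl (take n a) (take n b)"
  by (simp add: xl_def take_map take_zip)

lemma xl_zero_right: "length z = length l \<Longrightarrow> set z \<subseteq> {(False,False)} \<Longrightarrow> xl l z = l"
proof (induct l arbitrary: z)
  case (Cons p l)
  then obtain q z' where "z = q # z'" by (cases z) auto
  then show ?case using Cons by (auto simp: xp_def)
qed simp

lemma symd_symd: "symd A (symd A U) = U" by (auto simp: symd_def)

lemma kron_cancel: assumes X: "X \<in> carrier_mat a a" and Y: "Y \<in> carrier_mat a a" and M: "M > 0"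
  and e: "kron X (1\<^sub>m M) = kron Y (1\<^sub>m M)" shows "X = Y"
proof (rule eq_matI)
  fix i j assume "i < dim_row Y" "j < dim_col Y"
  then have ij: "i < a" "j < a" using Y by auto
  have "kron X (1\<^sub>m M) $$ (i*M+0, j*M+0) = X $$ (i,j) * 1\<^sub>m M $$ (0,0)"
    by (rule kron_index2[OF X one_carrier_mat ij M M])
  then have 1: "kron X (1\<^sub>m M) $$ (i*M, j*M) = X $$ (i,j)" using M by simp
  have "kron Y (1\<^sub>m M) $$ (i*M+0, j*M+0) = Y $$ (i,j) * 1\<^sub>m M $$ (0,0)"
    by (rule kron_index2[OF Y one_carrier_mat ij M M])
  then have 2: "kron Y (1\<^sub>m M) $$ (i*M, j*M) = Y $$ (i,j)" using M by simp
  show "X $$ (i,j) = Y $$ (i,j)" using e 1 2 by simp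
qed (use X Y in auto)

context stab
begin

lemma vv_split: "vv S = av S @ bv S" unfolding av_def bv_def by simp

lemma eps_sq: "b < K \<Longrightarrow> S \<subseteq> {..<k} \<Longrightarrow> eps b S * eps b S = 1"
proof -
  assume a: "b < K" "S \<subseteq> {..<k}"
  have "eps b S * eps b S = (lamS b S * lamS b S) * (om S * om S)" unfolding eps_def by (simp add: mult_ac)
  then show ?thesis using lamS_sq[OF a] om_sq[OF a(2)] by simp
qed

lemma TA_sub: "S \<in> TA \<Longrightarrow> S \<subseteq> {..<k}" and TB_sub: "S \<in> TB \<Longrightarrow> S \<subseteq> {..<k}"
  unfolding TA_def TB_def by auto

lemma inj_av_TA: "inj_on av TA"
proof (rule inj_onI)
  fix S T assume S: "S \<in> TA" and T: "T \<in> TA" and e: "av S = av T"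
  have "bv S = replicate m (False,False)" "bv T = replicate m (False,False)"
    using S T unfolding TA_def by (auto intro: zero_list)
  then have "vv S = vv T" using e by (simp add: vv_split)
  then show "S = T" using vv_inj TA_sub S T by blast
qed

lemma inj_bv_TB: "inj_on bv TB"
proof (rule inj_onI)
  fix S T assume S: "S \<in> TB" and T: "T \<in> TB" and e: "bv S = bv T"
  have "av S = replicate n (False,False)" "av T = replicate n (False,False)"
    using S T unfolding TB_def by (auto intro: zero_list)
  then have "vv S = vv T" using e by (simp add: vv_split)
  then show "S = T" using vv_inj TB_sub S T by blast
qed

lemma red_carrier: "reduced_state n m v \<in> carrier_mat N N" by (simp add: reduced_state_def)

lemma tr_sq: assumes X: "X \<in> carrier_mat d d" shows "tr (X * X) = (\<Sum>i<d. \<Sum>i'<d. X $$ (i,i') * X $$ (i',i))"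
proof -
  have "tr (X * X) = (\<Sum>i<d. (X * X) $$ (i,i))" unfolding tr_def using X by simp
  also have "\<dots> = (\<Sum>i<d. \<Sum>i'<d. X $$ (i,i') * X $$ (i',i))"
    by (rule sum.cong[OF refl]) (simp add: mult_index'[OF X X])
  finally show ?thesis .
qed

lemma purity_eq: assumes b: "b < K"
  shows "tr (reduced_state n m (\<Phi> b) * reduced_state n m (\<Phi> b)) = tr (rhoB (\<Phi> b) * rhoB (\<Phi> b))"
proof -
  define f where "f i j = \<Phi> b $ (i*M+j)" for i j
  define g where "g i j = cnj (\<Phi> b $ (i*M+j))" for i j
  have "tr (reduced_state n m (\<Phi> b) * reduced_state n m (\<Phi> b))
     = (\<Sum>i<N. \<Sum>i'<N. (\<Sum>j<M. f i j * g i' j) * (\<Sum>j'<M. f i' j' * g i j'))"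
    by (subst tr_sq[OF red_carrier]) (simp add: reduced_state_def f_def g_def)
  also have "\<dots> = (\<Sum>j<M. \<Sum>j'<M. (\<Sum>i<N. f i j * g i j') * (\<Sum>i'<N. f i' j' * g i' j))"
    by (rule purity_sym)
  also have "\<dots> = tr (rhoB (\<Phi> b) * rhoB (\<Phi> b))"
    by (subst tr_sq[of _ M]) (simp_all add: rhoB_def f_def g_def)
  finally show ?thesis .
qed

lemma purA: assumes b: "b < K"
  shows "tr (reduced_state n m (\<Phi> b) * reduced_state n m (\<Phi> b)) = of_nat (card TA) / of_nat N"
proof -
  have "tr (reduced_state n m (\<Phi> b) * reduced_state n m (\<Phi> b))
      = (1 / of_nat N) * (1 / of_nat N) * of_nat (card TA) * 2^n"
    unfolding rhoA[OF b]
    by (rule pur_pauli[OF TA_fin _ inj_av_TA]) (auto simp: eps_sq[OF b] TA_sub)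
  then show ?thesis by (simp add: field_simps)
qed

lemma purB: assumes b: "b < K"
  shows "tr (rhoB (\<Phi> b) * rhoB (\<Phi> b)) = of_nat (card TB) / of_nat M"
proof -
  have "tr (rhoB (\<Phi> b) * rhoB (\<Phi> b))
      = (1 / of_nat M) * (1 / of_nat M) * of_nat (card TB) * 2^m"
    unfolding rhoB[OF b]
    by (rule pur_pauli[OF TB_fin _ inj_bv_TB]) (auto simp: eps_sq[OF b] TB_sub)
  then show ?thesis by (simp add: field_simps)
qed

lemma TAB: "card TA * M = card TB * N"
proof -
  have b: "0 < K" by simp
  have "of_nat (card TA) / of_nat N = (of_nat (card TB) / of_nat M :: complex)"
    using purA[OF b] purB[OF b] purity_eq[OF b] by simp
  then have "of_nat (card TA * M) = (of_nat (card TB * N) :: complex)"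
    by (simp add: field_simps)
  then show ?thesis using of_nat_eq_iff by blast
qed

end


context stab
begin

lemma pb_TA: "S \<in> TA \<Longrightarrow> pb S = 1\<^sub>m M"
  unfolding pb_def TA_def using pauli_id'[of "bv S"] by simp

lemma pa_TB: "S \<in> TB \<Longrightarrow> pa S = 1\<^sub>m N"
  unfolding pa_def TB_def using pauli_id'[of "av S"] by simp

lemma symd_sub: "S \<subseteq> {..<k} \<Longrightarrow> T \<subseteq> {..<k} \<Longrightarrow> symd S T \<subseteq> {..<k}"
  by (auto simp: symd_def)

lemma fin_sub: "S \<subseteq> {..<k} \<Longrightarrow> finite S" using finite_subset by blast

lemma bv_symd: "S \<subseteq> {..<k} \<Longrightarrow> T \<subseteq> {..<k} \<Longrightarrow> bv (symd S T) = xl (bv S) (bv T)"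
  unfolding bv_def by (simp add: vv_symd fin_sub drop_xl)

lemma av_symd: "S \<subseteq> {..<k} \<Longrightarrow> T \<subseteq> {..<k} \<Longrightarrow> av (symd S T) = xl (av S) (av T)"
  unfolding av_def by (simp add: vv_symd fin_sub take_xl)

lemma TA_symd: assumes S: "S \<in> TA" and T: "T \<in> TA" shows "symd S T \<in> TA"
proof -
  have "bv S = replicate m (False,False)" "bv T = replicate m (False,False)"
    using S T unfolding TA_def by (auto intro: zero_list)
  then have "set (bv (symd S T)) \<subseteq> {(False,False)}"
    using bv_symd[OF TA_sub[OF S] TA_sub[OF T]] xl_self by metis
  then show ?thesis using symd_sub[OF TA_sub[OF S] TA_sub[OF T]] unfolding TA_def by simp
qed

lemma TB_symd: assumes S: "S \<in> TB" and T: "T \<in> TB" shows "symd S T \<in> TB"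
proof -
  have "av S = replicate n (False,False)" "av T = replicate n (False,False)"
    using S T unfolding TB_def by (auto intro: zero_list)
  then have "set (av (symd S T)) \<subseteq> {(False,False)}"
    using av_symd[OF TB_sub[OF S] TB_sub[OF T]] xl_self by metis
  then show ?thesis using symd_sub[OF TB_sub[OF S] TB_sub[OF T]] unfolding TB_def by simp
qed

lemma key_TA: assumes b: "b < K" and S: "S \<in> TA" and T: "T \<in> TA"
  shows "(eps b S * eps b T) \<cdot>\<^sub>m (pa S * pa T) = eps b (symd S T) \<cdot>\<^sub>m pa (symd S T)"
proof -
  have Ss: "S \<subseteq> {..<k}" and Ts: "T \<subseteq> {..<k}" using S T TA_sub by auto
  have U: "symd S T \<in> TA" using TA_symd[OF S T] .
  have Us: "symd S T \<subseteq> {..<k}" using TA_sub[OF U] .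
  have I: "1\<^sub>m M * 1\<^sub>m M = (1\<^sub>m M :: complex mat)" by simp
  have kc: "\<And>X. kron (pa X) (1\<^sub>m M) \<in> carrier_mat K K" using KNM by (metis kron_carrier pa_dims index_one_mat(2,3))
  have "gp S k * gp T k = (om S \<cdot>\<^sub>m kron (pa S) (1\<^sub>m M)) * (om T \<cdot>\<^sub>m kron (pa T) (1\<^sub>m M))"
    unfolding gp_split[OF Ss] gp_split[OF Ts] pb_TA[OF S] pb_TA[OF T] ..
  also have "\<dots> = om S \<cdot>\<^sub>m (om T \<cdot>\<^sub>m (kron (pa S) (1\<^sub>m M) * kron (pa T) (1\<^sub>m M)))"
    by (subst mult_smult_assoc_mat[OF kc smult_carrier_mat[OF kc]], subst mult_smult_distrib[OF kc kc], rule refl)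
  also have "\<dots> = (om S * om T) \<cdot>\<^sub>m kron (pa S * pa T) (1\<^sub>m M)"
    using kron_mult[OF pa_carrier one_carrier_mat pa_carrier one_carrier_mat, of S M T]
    by (simp add: smult_smult_mat)
  finally have "gp S k * gp T k = (om S * om T) \<cdot>\<^sub>m kron (pa S * pa T) (1\<^sub>m M)" .
  moreover have "gp S k * gp T k = om (symd S T) \<cdot>\<^sub>m kron (pa (symd S T)) (1\<^sub>m M)"
    using gp_mult[of k S T] gp_split[OF Us] pb_TA[OF U] by simp
  ultimately have e: "(om S * om T) \<cdot>\<^sub>m kron (pa S * pa T) (1\<^sub>m M) = om (symd S T) \<cdot>\<^sub>m kron (pa (symd S T)) (1\<^sub>m M)"
    by simp
  have l: "lamS b (symd S T) = lamS b S * lamS b T" using lamS_symd[OF b Ss Ts] .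
  have "kron ((eps b S * eps b T) \<cdot>\<^sub>m (pa S * pa T)) (1\<^sub>m M) = (lamS b S * lamS b T) \<cdot>\<^sub>m ((om S * om T) \<cdot>\<^sub>m kron (pa S * pa T) (1\<^sub>m M))"
    by (simp add: kron_smult_left smult_smult_mat eps_def mult_ac)
  also have "\<dots> = kron (eps b (symd S T) \<cdot>\<^sub>m pa (symd S T)) (1\<^sub>m M)"
    unfolding e by (simp add: kron_smult_left smult_smult_mat eps_def l mult_ac)
  finally have kk: "kron ((eps b S * eps b T) \<cdot>\<^sub>m (pa S * pa T)) (1\<^sub>m M) = kron (eps b (symd S T) \<cdot>\<^sub>m pa (symd S T)) (1\<^sub>m M)" .
  show ?thesis
    by (rule kron_cancel[OF smult_carrier_mat[OF mult_carrier_mat[OF pa_carrier pa_carrier]] smult_carrier_mat[OF pa_carrier] Mpos kk])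
qed

lemma symd_bij: "S \<in> TA \<Longrightarrow> bij_betw (symd S) TA TA"
  by (rule bij_betwI[of _ _ _ "symd S"]) (auto simp: TA_symd symd_symd)

lemma red_sq: assumes b: "b < K"
  shows "reduced_state n m (\<Phi> b) * reduced_state n m (\<Phi> b) = (of_nat (card TA) / of_nat N) \<cdot>\<^sub>m reduced_state n m (\<Phi> b)"
proof -
  define c where "c S = eps b S * (1 / of_nat N)" for S
  let ?X = "msum N N (\<lambda>S. c S \<cdot>\<^sub>m pauli_mat (av S)) TA"
  have X: "reduced_state n m (\<Phi> b) = ?X" unfolding c_def by (rule rhoA[OF b])
  have pc: "\<And>S. pauli_mat (av S) \<in> carrier_mat N N" using pa_carrier unfolding pa_def .
  have "?X * ?X = msum N N (\<lambda>S. (c S \<cdot>\<^sub>m pauli_mat (av S)) * ?X) TA"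
    using pc by (intro mult_msum_right) auto
  also have "\<dots> = msum N N (\<lambda>S. msum N N (\<lambda>T. (1 / of_nat N * (1 / of_nat N)) \<cdot>\<^sub>m (eps b (symd S T) \<cdot>\<^sub>m pa (symd S T))) TA) TA"
  proof (rule msum_cong)
    fix S assume S: "S \<in> TA"
    have "(c S \<cdot>\<^sub>m pauli_mat (av S)) * ?X = msum N N (\<lambda>T. (c S \<cdot>\<^sub>m pauli_mat (av S)) * (c T \<cdot>\<^sub>m pauli_mat (av T))) TA"
      using pc by (intro mult_msum_left) auto
    also have "\<dots> = msum N N (\<lambda>T. (1 / of_nat N * (1 / of_nat N)) \<cdot>\<^sub>m (eps b (symd S T) \<cdot>\<^sub>m pa (symd S T))) TA"
    proof (rule msum_cong)
      fix T assume T: "T \<in> TA"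
      have "(c S \<cdot>\<^sub>m pauli_mat (av S)) * (c T \<cdot>\<^sub>m pauli_mat (av T)) = (1 / of_nat N * (1 / of_nat N)) \<cdot>\<^sub>m ((eps b S * eps b T) \<cdot>\<^sub>m (pa S * pa T))"
        unfolding c_def pa_def using pc
        by (simp add: mult_smult_distrib[of _ N N _ N] mult_smult_assoc_mat[of _ N N _ N] smult_smult_mat mult_ac)
      then show "(c S \<cdot>\<^sub>m pauli_mat (av S)) * (c T \<cdot>\<^sub>m pauli_mat (av T)) = (1 / of_nat N * (1 / of_nat N)) \<cdot>\<^sub>m (eps b (symd S T) \<cdot>\<^sub>m pa (symd S T))"
        using key_TA[OF b S T] by simp
    qed
    finally show "(c S \<cdot>\<^sub>m pauli_mat (av S)) * ?X = msum N N (\<lambda>T. (1 / of_nat N * (1 / of_nat N)) \<cdot>\<^sub>m (eps b (symd S T) \<cdot>\<^sub>m pa (symd S T))) TA" .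
  qed
  also have "\<dots> = (of_nat (card TA) / of_nat N) \<cdot>\<^sub>m ?X"
  proof (rule eq_matI)
    fix i j assume "i < dim_row ((of_nat (card TA) / of_nat N) \<cdot>\<^sub>m ?X)" "j < dim_col ((of_nat (card TA) / of_nat N) \<cdot>\<^sub>m ?X)"
    then have ij: "i < N" "j < N" by auto
    have "msum N N (\<lambda>S. msum N N (\<lambda>T. (1 / of_nat N * (1 / of_nat N)) \<cdot>\<^sub>m (eps b (symd S T) \<cdot>\<^sub>m pa (symd S T))) TA) TA $$ (i,j)
        = (\<Sum>S\<in>TA. \<Sum>T\<in>TA. (1 / of_nat N * (1 / of_nat N)) * (eps b (symd S T) * pa (symd S T) $$ (i,j)))"
      using ij by simp
    also have "\<dots> = (\<Sum>S\<in>TA. \<Sum>U\<in>TA. (1 / of_nat N * (1 / of_nat N)) * (eps b U * pa U $$ (i,j)))"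
    proof (rule sum.cong[OF refl])
      fix S assume S: "S \<in> TA"
      show "(\<Sum>T\<in>TA. (1 / of_nat N * (1 / of_nat N)) * (eps b (symd S T) * pa (symd S T) $$ (i,j)))
          = (\<Sum>U\<in>TA. (1 / of_nat N * (1 / of_nat N)) * (eps b U * pa U $$ (i,j)))"
        using sum.reindex_bij_betw[OF symd_bij[OF S], of "\<lambda>U. (1 / of_nat N * (1 / of_nat N)) * (eps b U * pa U $$ (i,j))"]
        by simp
    qed
    also have "\<dots> = of_nat (card TA) * (1 / of_nat N * (1 / of_nat N)) * (\<Sum>U\<in>TA. eps b U * pa U $$ (i,j))"
      by (simp add: sum_distrib_left mult_ac)
    also have "\<dots> = ((of_nat (card TA) / of_nat N) \<cdot>\<^sub>m ?X) $$ (i,j)"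
      using ij by (simp add: c_def pa_def sum_distrib_left mult_ac)
    finally show "msum N N (\<lambda>S. msum N N (\<lambda>T. (1 / of_nat N * (1 / of_nat N)) \<cdot>\<^sub>m (eps b (symd S T) \<cdot>\<^sub>m pa (symd S T))) TA) TA $$ (i,j)
        = ((of_nat (card TA) / of_nat N) \<cdot>\<^sub>m ?X) $$ (i,j)" .
  qed auto
  finally show ?thesis unfolding X .
qed

lemma tr_red: assumes b: "b < K" shows "tr (reduced_state n m (\<Phi> b)) = 1"
proof -
  have "tr (reduced_state n m (\<Phi> b)) = (\<Sum>i<N. \<Sum>j<M. \<Phi> b $ (i*M+j) * cnj (\<Phi> b $ (i*M+j)))"
    unfolding tr_def reduced_state_def by simp
  also have "\<dots> = (\<Sum>l<N*M. \<Phi> b $ l * cnj (\<Phi> b $ l))" by (rule sum_mult_index[symmetric])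
  also have "\<dots> = 1" using norm_Phi[OF b] KNM by simp
  finally show ?thesis .
qed

lemma TA_ne: "{} \<in> TA" unfolding TA_def bv_def by (simp add: vv_empty set_replicate_conv_if)
lemma TB_ne: "{} \<in> TB" unfolding TB_def av_def by (simp add: vv_empty set_replicate_conv_if)
lemma TA_pos: "card TA > 0" using TA_ne TA_fin card_gt_0_iff by blast
lemma TB_pos: "card TB > 0" using TB_ne TB_fin card_gt_0_iff by blast

lemma entropy_val: assumes b: "b < K"
  shows "entanglement_entropy n m (\<Phi> b) = - log 2 (real (card TA) / real N)"
  unfolding entanglement_entropy_def
proof (rule entropy_scaled_proj[OF red_carrier])
  show "reduced_state n m (\<Phi> b) * reduced_state n m (\<Phi> b) = complex_of_real (real (card TA) / real N) \<cdot>\<^sub>m reduced_state n m (\<Phi> b)"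
    using red_sq[OF b] by simp
  show "tr (reduced_state n m (\<Phi> b)) = 1" by (rule tr_red[OF b])
  show "0 < real (card TA) / real N" using TA_pos by simp
qed

end


lemma kron_11: "X \<in> carrier_mat 1 1 \<Longrightarrow> kron A X = X $$ (0,0) \<cdot>\<^sub>m A"
  by (rule eq_matI) auto

lemma ket_carrier[simp]: "ket v \<in> carrier_mat (dim_vec v) 1" unfolding ket_def by auto
lemma bra_carrier[simp]: "bra v \<in> carrier_mat 1 (dim_vec v)" unfolding bra_def by auto

context stab
begin

definition W where "W = av ` Pow {..<k}"

lemma W_fin: "finite W" unfolding W_def by simp

lemma fiber: assumes S0: "S0 \<in> Pow {..<k}"
  shows "{S \<in> Pow {..<k}. av S = av S0} = symd S0 ` TB" and "inj_on (symd S0) TB"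
proof -
  have S0s: "S0 \<subseteq> {..<k}" using S0 by simp
  show "inj_on (symd S0) TB"
  proof (rule inj_onI)
    fix x y assume "symd S0 x = symd S0 y"
    then have "symd S0 (symd S0 x) = symd S0 (symd S0 y)" by simp
    then show "x = y" by (simp add: symd_symd)
  qed
  show "{S \<in> Pow {..<k}. av S = av S0} = symd S0 ` TB"
  proof
    show "{S \<in> Pow {..<k}. av S = av S0} \<subseteq> symd S0 ` TB"
    proof
      fix S assume S: "S \<in> {S \<in> Pow {..<k}. av S = av S0}"
      then have Ss: "S \<subseteq> {..<k}" and e: "av S = av S0" by auto
      have "av (symd S0 S) = xl (av S0) (av S0)" using av_symd[OF S0s Ss] e by simp
      then have "symd S0 S \<in> TB" unfolding TB_def using xl_self symd_sub[OF S0s Ss] by auto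
      moreover have "S = symd S0 (symd S0 S)" by (simp add: symd_symd)
      ultimately show "S \<in> symd S0 ` TB" by blast
    qed
    show "symd S0 ` TB \<subseteq> {S \<in> Pow {..<k}. av S = av S0}"
    proof
      fix S assume "S \<in> symd S0 ` TB"
      then obtain U where U: "U \<in> TB" and S: "S = symd S0 U" by blast
      have Us: "U \<subseteq> {..<k}" using TB_sub[OF U] .
      have "av S = xl (av S0) (av U)" unfolding S by (rule av_symd[OF S0s Us])
      also have "\<dots> = av S0" using U unfolding TB_def by (intro xl_zero_right) auto
      finally show "S \<in> {S \<in> Pow {..<k}. av S = av S0}" using symd_sub[OF S0s Us] S by auto
    qed
  qed
qed

lemma card_W_TB: "card W * card TB = K"
proof -
  have "Pow {..<k} = (\<Union>w\<in>W. {S \<in> Pow {..<k}. av S = w})" unfolding W_def by auto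
  then have "card (Pow {..<k}) = card (\<Union>w\<in>W. {S \<in> Pow {..<k}. av S = w})" by (rule arg_cong)
  also have "\<dots> = (\<Sum>w\<in>W. card {S \<in> Pow {..<k}. av S = w})"
    using W_fin by (intro card_UN_disjoint) auto
  also have "\<dots> = (\<Sum>w\<in>W. card TB)"
  proof (rule sum.cong[OF refl])
    fix w assume "w \<in> W"
    then obtain S0 where S0: "S0 \<in> Pow {..<k}" and w: "w = av S0" unfolding W_def by blast
    show "card {S \<in> Pow {..<k}. av S = w} = card TB"
      unfolding w fiber(1)[OF S0] using card_image[OF fiber(2)[OF S0]] .
  qed
  finally show ?thesis by (simp add: card_Pow)
qed

lemma card_W_TA: "card W * card TA = N * N"
proof -
  have "card W * card TA * M = card W * (card TB * N)" using TAB by (simp add: mult.assoc)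
  also have "\<dots> = (card W * card TB) * N" by (simp add: mult.assoc)
  also have "\<dots> = N * N * M" using card_W_TB KNM by simp
  finally show ?thesis by simp
qed

definition ee :: "complex vec \<Rightarrow> nat set \<Rightarrow> complex" where
  "ee \<psi> S = (bra \<psi> * pb S * ket \<psi>) $$ (0,0)"

lemma sandwich: assumes psi: "\<psi> \<in> carrier_vec M" and A: "A \<in> carrier_mat N N" and B: "B \<in> carrier_mat M M"
  shows "kron (1\<^sub>m N) (bra \<psi>) * kron A B * kron (1\<^sub>m N) (ket \<psi>) = (bra \<psi> * B * ket \<psi>) $$ (0,0) \<cdot>\<^sub>m A"
proof -
  have d: "dim_vec \<psi> = M" using psi by auto
  have br: "bra \<psi> \<in> carrier_mat 1 M" using bra_carrier[of \<psi>] unfolding d .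
  have kt: "ket \<psi> \<in> carrier_mat M 1" using ket_carrier[of \<psi>] unfolding d .
  have "kron (1\<^sub>m N) (bra \<psi>) * kron A B = kron (1\<^sub>m N * A) (bra \<psi> * B)"
    by (rule kron_mult[OF one_carrier_mat br A B])
  also have "\<dots> = kron A (bra \<psi> * B)" using A by simp
  finally have "kron (1\<^sub>m N) (bra \<psi>) * kron A B * kron (1\<^sub>m N) (ket \<psi>) = kron A (bra \<psi> * B) * kron (1\<^sub>m N) (ket \<psi>)" by simp
  also have "\<dots> = kron (A * 1\<^sub>m N) (bra \<psi> * B * ket \<psi>)"
    by (rule kron_mult[OF A mult_carrier_mat[OF br B] one_carrier_mat kt])
  also have "\<dots> = (bra \<psi> * B * ket \<psi>) $$ (0,0) \<cdot>\<^sub>m A"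
    using A br B kt by (simp add: kron_11)
  finally show ?thesis .
qed

lemma L_carrier: assumes "\<psi> \<in> carrier_vec M" shows "kron (1\<^sub>m N) (bra \<psi>) \<in> carrier_mat N K"
proof -
  have d: "dim_vec \<psi> = M" using assms by auto
  show ?thesis using kron_carrier[of "1\<^sub>m N" "bra \<psi>"] d KNM by (simp add: bra_def)
qed
lemma R_carrier: assumes "\<psi> \<in> carrier_vec M" shows "kron (1\<^sub>m N) (ket \<psi>) \<in> carrier_mat K N"
proof -
  have d: "dim_vec \<psi> = M" using assms by auto
  show ?thesis using kron_carrier[of "1\<^sub>m N" "ket \<psi>"] d KNM by (simp add: ket_def)
qed

lemma kron_pab_carrier: "kron (pa S) (pb S) \<in> carrier_mat K K"
  using KNM kron_carrier[of "pa S" "pb S"] by simp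

lemma mu_expand: assumes psi: "\<psi> \<in> carrier_vec M" and b: "b < K"
  shows "povm_elem n \<psi> (\<Phi> b) = msum N N (\<lambda>S. (eps b S / of_nat K * ee \<psi> S) \<cdot>\<^sub>m pa S) (Pow {..<k})"
proof -
  let ?L = "kron (1\<^sub>m N) (bra \<psi>)" and ?R = "kron (1\<^sub>m N) (ket \<psi>)"
  have L: "?L \<in> carrier_mat N K" and R: "?R \<in> carrier_mat K N" using L_carrier[OF psi] R_carrier[OF psi] .
  have "povm_elem n \<psi> (\<Phi> b) = ?L * kb b * ?R" unfolding povm_elem_def kb_def ..
  also have "\<dots> = ?L * msum K K (\<lambda>S. (eps b S / of_nat K) \<cdot>\<^sub>m kron (pa S) (pb S)) (Pow {..<k}) * ?R"
    by (simp add: kb_expand2[OF b])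
  also have "\<dots> = msum N K (\<lambda>S. ?L * ((eps b S / of_nat K) \<cdot>\<^sub>m kron (pa S) (pb S))) (Pow {..<k}) * ?R"
    using L kron_pab_carrier by (subst mult_msum_left[OF L]) auto
  also have "\<dots> = msum N N (\<lambda>S. ?L * ((eps b S / of_nat K) \<cdot>\<^sub>m kron (pa S) (pb S)) * ?R) (Pow {..<k})"
    using L R kron_pab_carrier by (subst mult_msum_right[OF R]) (auto intro: mult_carrier_mat)
  also have "\<dots> = msum N N (\<lambda>S. (eps b S / of_nat K * ee \<psi> S) \<cdot>\<^sub>m pa S) (Pow {..<k})"
  proof (rule msum_cong)
    fix S
    have "?L * ((eps b S / of_nat K) \<cdot>\<^sub>m kron (pa S) (pb S)) * ?R = (eps b S / of_nat K) \<cdot>\<^sub>m (?L * kron (pa S) (pb S) * ?R)"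
      using L R kron_pab_carrier[of S]
      by (simp add: mult_smult_distrib[OF L] mult_smult_assoc_mat[OF mult_carrier_mat[OF L kron_pab_carrier] R])
    also have "\<dots> = (eps b S / of_nat K * ee \<psi> S) \<cdot>\<^sub>m pa S"
      unfolding sandwich[OF psi pa_carrier pb_carrier] ee_def by (simp add: smult_smult_mat)
    finally show "?L * ((eps b S / of_nat K) \<cdot>\<^sub>m kron (pa S) (pb S)) * ?R = (eps b S / of_nat K * ee \<psi> S) \<cdot>\<^sub>m pa S" .
  qed
  finally show ?thesis .
qed

lemma mu_combo: assumes psi: "\<psi> \<in> carrier_vec M" and S: "S \<subseteq> {..<k}"
  shows "msum N N (\<lambda>b. lamS b S \<cdot>\<^sub>m povm_elem n \<psi> (\<Phi> b)) {..<K} = (om S * ee \<psi> S) \<cdot>\<^sub>m pa S"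
proof -
  let ?L = "kron (1\<^sub>m N) (bra \<psi>)" and ?R = "kron (1\<^sub>m N) (ket \<psi>)"
  have L: "?L \<in> carrier_mat N K" and R: "?R \<in> carrier_mat K N" using L_carrier[OF psi] R_carrier[OF psi] .
  have "msum N N (\<lambda>b. lamS b S \<cdot>\<^sub>m povm_elem n \<psi> (\<Phi> b)) {..<K} = msum N N (\<lambda>b. ?L * (lamS b S \<cdot>\<^sub>m kb b) * ?R) {..<K}"
  proof (rule msum_cong)
    fix b assume "b \<in> {..<K}"
    then have b: "b < K" by simp
    show "lamS b S \<cdot>\<^sub>m povm_elem n \<psi> (\<Phi> b) = ?L * (lamS b S \<cdot>\<^sub>m kb b) * ?R"
      unfolding povm_elem_def kb_def[symmetric] using L R kb_carrier[OF b]
      by (simp add: mult_smult_distrib[OF L] mult_smult_assoc_mat[OF mult_carrier_mat[OF L kb_carrier[OF b]] R])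
  qed
  also have "\<dots> = ?L * msum K K (\<lambda>b. lamS b S \<cdot>\<^sub>m kb b) {..<K} * ?R"
    using L R by (subst mult_msum_left[OF L], force, subst mult_msum_right[OF R]) (auto intro: mult_carrier_mat)
  also have "\<dots> = ?L * gp S k * ?R" using gp_spectral[OF S] by simp
  also have "\<dots> = (om S * ee \<psi> S) \<cdot>\<^sub>m pa S"
    unfolding gp_split[OF S] using L R kron_pab_carrier[of S]
    by (simp add: mult_smult_distrib[OF L] mult_smult_assoc_mat[OF mult_carrier_mat[OF L kron_pab_carrier] R]
        sandwich[OF psi pa_carrier pb_carrier] ee_def smult_smult_mat)
  finally show ?thesis .
qed

end


definition phi2 :: "complex vec" where
  "phi2 = vec 2 (\<lambda>i. if i = 0 then 3/5 else Complex (12/25) (16/25))"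

primrec psi0 :: "nat \<Rightarrow> complex vec" where
  "psi0 0 = vec 1 (\<lambda>_. 1)"
| "psi0 (Suc m) = vec (2 * 2^m) (\<lambda>i. phi2 $ (i div 2^m) * psi0 m $ (i mod 2^m))"

lemma psi0_dim[simp]: "dim_vec (psi0 m) = 2^m" by (induct m) auto
lemma psi0_carrier: "psi0 m \<in> carrier_vec (2^m)" by (rule carrier_vecI) simp
lemma phi2_dim[simp]: "dim_vec phi2 = 2" by (simp add: phi2_def)

lemma ket_psi0: "ket (psi0 (Suc m)) = kron (ket phi2) (ket (psi0 m))"
proof (rule eq_matI)
  fix i j assume i: "i < dim_row (kron (ket phi2) (ket (psi0 m)))" and j: "j < dim_col (kron (ket phi2) (ket (psi0 m)))"
  have i': "i < 2 * 2^m" and j': "j = 0" using i j by (simp_all add: ket_def)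
  have "i div 2^m < 2" using i' by (simp add: less_mult_imp_div_less)
  then show "ket (psi0 (Suc m)) $$ (i, j) = kron (ket phi2) (ket (psi0 m)) $$ (i, j)"
    using i' j' by (simp add: ket_def)
qed (simp_all add: ket_def)

lemma bra_psi0: "bra (psi0 (Suc m)) = kron (bra phi2) (bra (psi0 m))"
proof (rule eq_matI)
  fix i j assume i: "i < dim_row (kron (bra phi2) (bra (psi0 m)))" and j: "j < dim_col (kron (bra phi2) (bra (psi0 m)))"
  have j': "j < 2 * 2^m" and i': "i = 0" using i j by (simp_all add: bra_def)
  have "j div 2^m < 2" using j' by (simp add: less_mult_imp_div_less)
  then show "bra (psi0 (Suc m)) $$ (i, j) = kron (bra phi2) (bra (psi0 m)) $$ (i, j)"
    using i' j' by (simp add: bra_def)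
qed (simp_all add: bra_def)

definition e1 :: "bool \<times> bool \<Rightarrow> complex" where
  "e1 q = (bra phi2 * pauli1 q * ket phi2) $$ (0,0)"

lemma kron_11_11: "A \<in> carrier_mat 1 1 \<Longrightarrow> B \<in> carrier_mat 1 1 \<Longrightarrow> kron A B = mat 1 1 (\<lambda>_. A $$ (0,0) * B $$ (0,0))"
  by (rule eq_matI) auto

lemma expect_psi0: "length l = m \<Longrightarrow> bra (psi0 m) * pauli_mat l * ket (psi0 m) = mat 1 1 (\<lambda>_. prod_list (map e1 l))"
proof (induct m arbitrary: l)
  case 0
  then show ?case by (auto intro!: eq_matI simp: bra_def ket_def scalar_prod_def)
next
  case (Suc m)
  then obtain q l' where l: "l = q # l'" and len: "length l' = m" by (cases l) auto
  have bp: "bra phi2 \<in> carrier_mat 1 2" and kp: "ket phi2 \<in> carrier_mat 2 1"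
    using bra_carrier[of phi2] ket_carrier[of phi2] by simp_all
  have bs: "bra (psi0 m) \<in> carrier_mat 1 (2^m)" and ks: "ket (psi0 m) \<in> carrier_mat (2^m) 1"
    using bra_carrier[of "psi0 m"] ket_carrier[of "psi0 m"] by simp_all
  have pl: "pauli_mat l' \<in> carrier_mat (2^m) (2^m)" using pauli_carrier[of l'] len by simp
  have "bra (psi0 (Suc m)) * pauli_mat l * ket (psi0 (Suc m))
      = kron (bra phi2) (bra (psi0 m)) * kron (pauli1 q) (pauli_mat l') * kron (ket phi2) (ket (psi0 m))"
    unfolding l bra_psi0 ket_psi0 by simp
  also have "\<dots> = kron (bra phi2 * pauli1 q) (bra (psi0 m) * pauli_mat l') * kron (ket phi2) (ket (psi0 m))"
    by (subst kron_mult[OF bp bs pauli1_carrier pl]) simp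
  also have "\<dots> = kron (bra phi2 * pauli1 q * ket phi2) (bra (psi0 m) * pauli_mat l' * ket (psi0 m))"
    by (rule kron_mult[OF mult_carrier_mat[OF bp pauli1_carrier] mult_carrier_mat[OF bs pl] kp ks])
  also have "\<dots> = mat 1 1 (\<lambda>_. prod_list (map e1 l))"
    unfolding Suc(1)[OF len] l using bp kp
    by (subst kron_11_11) (auto simp: e1_def intro!: mult_carrier_mat[of _ 1 2 _ 1])
  finally show ?case .
qed

lemma phi2_vals: "phi2 $ 0 = 3/5" "phi2 $ 1 = Complex (12/25) (16/25)"
  by (simp_all add: phi2_def)

lemma e1_formula: "e1 q = cnj (phi2 $ 0) * (pe q 0 0 * phi2 $ 0 + pe q 0 1 * phi2 $ 1)
   + cnj (phi2 $ 1) * (pe q 1 0 * phi2 $ 0 + pe q 1 1 * phi2 $ 1)"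
  unfolding e1_def pauli1_mat bra_def ket_def
  by (simp add: scalar_prod_def numeral_2_eq_2 algebra_simps)

lemma e1_vals: "e1 (False,False) = 1" "e1 (True,False) = 72/125" "e1 (False,True) = -7/25"
  "e1 (True,True) = 96/125"
  unfolding e1_formula phi2_vals pe_def by (simp_all add: complex_eq_iff)

lemma e1_nz: "e1 q \<noteq> 0"
  by (cases q) (case_tac a; case_tac b; simp add: e1_vals)

lemma e1_nz': "0 \<noteq> e1 q" using e1_nz[of q] by auto

lemma expect_nz: "length l = m \<Longrightarrow> (bra (psi0 m) * pauli_mat l * ket (psi0 m)) $$ (0,0) \<noteq> 0"
  by (auto simp: expect_psi0 prod_list_zero_iff e1_nz')

lemma psi0_unit: "unit_state m (psi0 m)"
proof -
  have "(bra (psi0 m) * pauli_mat (replicate m (False,False)) * ket (psi0 m)) $$ (0,0) = 1"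
    by (simp add: expect_psi0 e1_vals)
  moreover have "bra (psi0 m) * 1\<^sub>m (2^m) = bra (psi0 m)"
    using right_mult_one_mat[OF bra_carrier[of "psi0 m"]] by simp
  ultimately have "(bra (psi0 m) * ket (psi0 m)) $$ (0,0) = 1"
    using pauli_id[of m] by simp
  moreover have "(bra (psi0 m) * ket (psi0 m)) $$ (0,0) = psi0 m \<bullet>c psi0 m"
    by (simp add: bra_def ket_def scalar_prod_def mult.commute del: psi0.simps)
  ultimately show ?thesis unfolding unit_state_def using psi0_carrier by simp
qed


lemma pauli_inj: "length a = length a' \<Longrightarrow> pauli_mat a = pauli_mat a' \<Longrightarrow> a = a'"
proof (rule ccontr)
  assume len: "length a = length a'" and e: "pauli_mat a = pauli_mat a'" and ne: "a \<noteq> a'"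
  have "tr (pauli_mat a * pauli_mat a') = 0" using tr_pauli_mult[OF len] ne by simp
  moreover have "tr (pauli_mat a * pauli_mat a') = 2 ^ length a" using tr_pauli_mult[of a a] e by simp
  ultimately show False by simp
qed

context stab
begin

definition MU where "MU \<psi> = (\<lambda>b. povm_elem n \<psi> (\<Phi> b)) ` {..<K}"
definition PW where "PW = pauli_mat ` W"

lemma MU_eq: "{povm_elem n \<psi> (\<Phi> b) | b. b < K} = MU \<psi>" unfolding MU_def by auto

lemma s_mu_MU: "s_mu n m \<Phi> \<psi> = vectorspace.dim class_ring ((module_mat TYPE(complex) N N)\<lparr>carrier :=
   LinearCombinations.module.span class_ring (module_mat TYPE(complex) N N) (MU \<psi>)\<rparr>)"
  unfolding s_mu_def span_dim_def MU_eq ..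

lemma PW_carrier: "PW \<subseteq> carrier_mat N N"
  unfolding PW_def W_def using pa_carrier unfolding pa_def by auto

lemma PW_fin: "finite PW" unfolding PW_def using W_fin by simp

lemma pa_PW: "S \<subseteq> {..<k} \<Longrightarrow> pa S \<in> PW" unfolding PW_def W_def pa_def by blast

lemma mu_carrier: "\<psi> \<in> carrier_vec M \<Longrightarrow> b < K \<Longrightarrow> povm_elem n \<psi> (\<Phi> b) \<in> carrier_mat N N"
  using mu_expand by simp

lemma MU_carrier: "\<psi> \<in> carrier_vec M \<Longrightarrow> MU \<psi> \<subseteq> carrier_mat N N"
  unfolding MU_def using mu_carrier by auto

lemma MU_fin: "finite (MU \<psi>)" unfolding MU_def by simp

lemma MU_in_span: assumes psi: "\<psi> \<in> carrier_vec M"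
  shows "MU \<psi> \<subseteq> LinearCombinations.module.span class_ring (module_mat TYPE(complex) N N) PW"
proof
  fix x assume "x \<in> MU \<psi>"
  then obtain b where b: "b < K" and x: "x = povm_elem n \<psi> (\<Phi> b)" unfolding MU_def by auto
  show "x \<in> LinearCombinations.module.span class_ring (module_mat TYPE(complex) N N) PW"
    unfolding x mu_expand[OF psi b]
  proof (rule mspace.span_msum[OF PW_carrier], simp)
    fix S assume "S \<in> Pow {..<k}"
    then show "(eps b S / of_nat K * ee \<psi> S) \<cdot>\<^sub>m pa S \<in> LinearCombinations.module.span class_ring (module_mat TYPE(complex) N N) PW"
      by (intro mspace.span_smult[OF PW_carrier] mspace.span_gen[OF PW_carrier] pa_PW) simp
  qed
qed

lemma s_mu_le: assumes psi: "\<psi> \<in> carrier_vec M" shows "s_mu n m \<Phi> \<psi> \<le> card W"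
proof -
  have "s_mu n m \<Phi> \<psi> \<le> card PW"
    unfolding s_mu_MU by (rule mspace.dim_span_le[OF MU_carrier[OF psi] MU_fin PW_carrier PW_fin MU_in_span[OF psi]])
  also have "card PW \<le> card W" unfolding PW_def by (rule card_image_le[OF W_fin])
  finally show ?thesis .
qed

lemma W_lists: "W \<subseteq> {l. set l \<subseteq> UNIV \<and> length l = n}" unfolding W_def by auto

lemma card_lists: "card {l :: (bool \<times> bool) list. set l \<subseteq> UNIV \<and> length l = n} = N * N"
proof -
  have "card {l :: (bool \<times> bool) list. set l \<subseteq> UNIV \<and> length l = n} = card (UNIV :: (bool \<times> bool) set) ^ n"
    by (rule card_lists_length_eq) simp
  also have "card (UNIV :: (bool \<times> bool) set) = 4"
    by (simp add: UNIV_Times_UNIV[symmetric] card_cartesian_product del: UNIV_Times_UNIV)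
  also have "(4::nat) ^ n = N * N" by (simp add: power_mult_distrib[symmetric])
  finally show ?thesis .
qed

lemma inj_pauli_W: "inj_on pauli_mat W"
  using W_lists by (intro inj_onI pauli_inj) auto

lemma PW_li: "\<not> LinearCombinations.module.lin_dep class_ring (module_mat TYPE(complex) N N) PW"
proof (rule mspace.li_dual[OF PW_fin PW_carrier])
  show "\<And>v. v \<in> PW \<Longrightarrow> (1 / of_nat N) \<cdot>\<^sub>m v \<in> carrier_mat N N" using PW_carrier by auto
  fix v w assume v: "v \<in> PW" and w: "w \<in> PW"
  then obtain a a' where a: "a \<in> W" "v = pauli_mat a" and a': "a' \<in> W" "w = pauli_mat a'" unfolding PW_def by auto
  have la: "length a = n" "length a' = n" using a(1) a'(1) W_lists by auto
  have pc: "pauli_mat a' \<in> carrier_mat N N" "pauli_mat a \<in> carrier_mat N N" using la pauli_carrier by metis+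
  have "tr ((1 / of_nat N) \<cdot>\<^sub>m w * v) = (1 / of_nat N) * tr (pauli_mat a' * pauli_mat a)"
    unfolding a(2) a'(2) using pc by (simp add: mult_smult_assoc_mat[of _ N N _ N] tr_smult[of _ N])
  also have "\<dots> = (if a' = a then 1 else 0)" using tr_pauli_mult[of a' a] la by simp
  also have "(a' = a) = (v = w)" using a a' inj_pauli_W by (auto dest: inj_onD)
  finally show "tr ((1 / of_nat N) \<cdot>\<^sub>m w * v) = (if v = w then 1 else 0)" by simp
qed

lemma ee_nz: "S \<subseteq> {..<k} \<Longrightarrow> ee (psi0 m) S \<noteq> 0"
  unfolding ee_def pb_def using expect_nz[of "bv S" m] by simp

lemma PW_in_span: "PW \<subseteq> LinearCombinations.module.span class_ring (module_mat TYPE(complex) N N) (MU (psi0 m))"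
proof
  have psi: "psi0 m \<in> carrier_vec M" using psi0_carrier .
  fix x assume "x \<in> PW"
  then obtain S where S: "S \<subseteq> {..<k}" and x: "x = pa S" unfolding PW_def W_def pa_def by auto
  have nz: "om S * ee (psi0 m) S \<noteq> 0" using om_prop(1)[OF S] ee_nz[OF S] by simp
  have "msum N N (\<lambda>b. lamS b S \<cdot>\<^sub>m povm_elem n (psi0 m) (\<Phi> b)) {..<K} \<in> LinearCombinations.module.span class_ring (module_mat TYPE(complex) N N) (MU (psi0 m))"
  proof (rule mspace.span_msum[OF MU_carrier[OF psi]], simp)
    fix b assume "b \<in> {..<K}"
    then show "lamS b S \<cdot>\<^sub>m povm_elem n (psi0 m) (\<Phi> b) \<in> LinearCombinations.module.span class_ring (module_mat TYPE(complex) N N) (MU (psi0 m))"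
      by (intro mspace.span_smult[OF MU_carrier[OF psi]] mspace.span_gen[OF MU_carrier[OF psi]]) (auto simp: MU_def)
  qed
  then have "(1 / (om S * ee (psi0 m) S)) \<cdot>\<^sub>m ((om S * ee (psi0 m) S) \<cdot>\<^sub>m pa S) \<in> LinearCombinations.module.span class_ring (module_mat TYPE(complex) N N) (MU (psi0 m))"
    unfolding mu_combo[OF psi S] by (rule mspace.span_smult[OF MU_carrier[OF psi]])
  then show "x \<in> LinearCombinations.module.span class_ring (module_mat TYPE(complex) N N) (MU (psi0 m))"
    unfolding x using nz by (simp add: smult_smult_mat)
qed

lemma s_mu_psi0: "s_mu n m \<Phi> (psi0 m) = card W"
proof -
  have psi: "psi0 m \<in> carrier_vec M" using psi0_carrier .
  have e: "LinearCombinations.module.span class_ring (module_mat TYPE(complex) N N) (MU (psi0 m))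
         = LinearCombinations.module.span class_ring (module_mat TYPE(complex) N N) PW"
    using mspace.span_mono[OF MU_carrier[OF psi] PW_carrier MU_in_span[OF psi]]
      mspace.span_mono[OF PW_carrier MU_carrier[OF psi] PW_in_span] by blast
  have "s_mu n m \<Phi> (psi0 m) = card PW"
    unfolding s_mu_MU e by (rule mspace.dim_span_li[OF PW_carrier PW_fin PW_li])
  also have "\<dots> = card W" unfolding PW_def by (rule card_image[OF inj_pauli_W])
  finally show ?thesis .
qed

end


context stab
begin

lemma cardW_real: "real (card W) = real N * real N / real (card TA)"
proof -
  have "real (card W) * real (card TA) = real N * real N" using card_W_TA by (metis of_nat_mult)
  then show ?thesis using TA_pos by (simp add: field_simps)
qed

lemma powr_p: assumes b: "b < K"
  shows "2 powr (real n + entanglement_entropy n m (\<Phi> b)) = real N * real N / real (card TA)"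
proof -
  have pos: "real (card TA) / real N > 0" using TA_pos by simp
  have "2 powr (real n + entanglement_entropy n m (\<Phi> b)) = 2 powr real n * 2 powr (- log 2 (real (card TA) / real N))"
    unfolding entropy_val[OF b] by (rule powr_add)
  also have "2 powr (- log 2 (real (card TA) / real N)) = inverse (real (card TA) / real N)"
    using pos by (simp add: powr_minus)
  also have "(2::real) powr real n = real N" by (simp add: powr_realpow)
  finally show ?thesis by (simp add: field_simps)
qed

lemma part1: assumes u: "unit_state m \<psi>" and b: "b < K"
  shows "real (s_mu n m \<Phi> \<psi>) \<le> 2 powr (real n + entanglement_entropy n m (\<Phi> b))"
proof -
  have psi: "\<psi> \<in> carrier_vec M" using u unfolding unit_state_def by simp
  have "real (s_mu n m \<Phi> \<psi>) \<le> real (card W)" using s_mu_le[OF psi] by simp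
  then show ?thesis unfolding powr_p[OF b] cardW_real .
qed

lemma part2: assumes b: "b < K"
  shows "(\<exists>\<psi>. unit_state m \<psi> \<and> s_mu n m \<Phi> \<psi> = 4 ^ n) \<longleftrightarrow> (n \<le> m \<and> entanglement_entropy n m (\<Phi> b) = real n)"
proof
  assume "\<exists>\<psi>. unit_state m \<psi> \<and> s_mu n m \<Phi> \<psi> = 4 ^ n"
  then obtain \<psi> where u: "unit_state m \<psi>" and s: "s_mu n m \<Phi> \<psi> = 4 ^ n" by blast
  have psi: "\<psi> \<in> carrier_vec M" using u unfolding unit_state_def by simp
  have NN: "(4::nat) ^ n = N * N" by (simp add: power_mult_distrib[symmetric])
  have le: "N * N \<le> card W" using s_mu_le[OF psi] s NN by simp
  have "card W * card TA \<le> card W * 1" using le card_W_TA by simp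
  moreover have "card W > 0" using le by (metis less_le_trans nat_0_less_mult_iff pos2 zero_less_power)
  ultimately have "card TA \<le> 1" by (simp only: mult_le_cancel1)
  then have t1: "card TA = 1" using TA_pos by simp
  have "entanglement_entropy n m (\<Phi> b) = - log 2 (1 / real N)" using entropy_val[OF b] t1 by simp
  also have "\<dots> = real n" by (simp add: log_divide)
  finally have ee: "entanglement_entropy n m (\<Phi> b) = real n" .
  have "M = card TB * N" using TAB t1 by simp
  then have "N \<le> M" using TB_pos by simp
  then have "n \<le> m" by simp
  then show "n \<le> m \<and> entanglement_entropy n m (\<Phi> b) = real n" using ee by simp
next
  assume a: "n \<le> m \<and> entanglement_entropy n m (\<Phi> b) = real n"
  have pos: "real (card TA) / real N > 0" using TA_pos by simp
  have "log 2 (real (card TA) / real N) = - real n" using a entropy_val[OF b] by simp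
  then have "real (card TA) / real N = 2 powr (- real n)" using pos by (metis powr_log_cancel one_less_numeral_iff semiring_norm(76) zero_less_numeral less_irrefl)
  also have "\<dots> = 1 / real N" by (simp add: powr_minus powr_realpow divide_inverse)
  finally have "real (card TA) = 1" by (simp add: field_simps)
  then have t1: "card TA = 1" by simp
  have "card W = N * N" using card_W_TA t1 by simp
  then have "s_mu n m \<Phi> (psi0 m) = 4 ^ n" using s_mu_psi0 by (simp add: power_mult_distrib[symmetric])
  then show "\<exists>\<psi>. unit_state m \<psi> \<and> s_mu n m \<Phi> \<psi> = 4 ^ n" using psi0_unit by blast
qed

end

theorem theorem3:
  fixes n m :: nat and \<Phi> :: "nat \<Rightarrow> complex vec"
  assumes "stabilizer_basis (n + m) \<Phi>"
  shows "(\<forall>\<psi>. unit_state m \<psi> \<longrightarrow>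
            (\<forall>b < 2 ^ (n + m). real (s_mu n m \<Phi> \<psi>) \<le> 2 powr (real n + entanglement_entropy n m (\<Phi> b))))
       \<and> (\<forall>b < 2 ^ (n + m).
            (\<exists>\<psi>. unit_state m \<psi> \<and> s_mu n m \<Phi> \<psi> = 4 ^ n)
              \<longleftrightarrow> (n \<le> m \<and> entanglement_entropy n m (\<Phi> b) = real n))"
proof -
  from assms obtain P where
    c: "\<forall>b < 2 ^ (n+m). \<Phi> b \<in> carrier_vec (2 ^ (n+m))"
    and o: "\<forall>b < 2 ^ (n+m). \<forall>b' < 2 ^ (n+m). \<Phi> b \<bullet>c \<Phi> b' = (if b = b' then 1 else 0)"
    and l: "\<forall>j < n+m. length (P j) = n+m"
    and cm: "\<forall>i < n+m. \<forall>j < n+m. pauli_mat (P i) * pauli_mat (P j) = pauli_mat (P j) * pauli_mat (P i)"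
    and ind: "pauli_independent (n+m) (n+m) P"
    and e: "\<forall>b < 2 ^ (n+m). \<forall>j < n+m. \<exists>ev. eigenvector (pauli_mat (P j)) (\<Phi> b) ev"
    unfolding stabilizer_basis_def by blast
  interpret stab n m \<Phi> P
    by (unfold_locales) (use c o l cm ind e in auto)
  show ?thesis using part1 part2 by blast
qed


end
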